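(* Fix $\varepsilon\in(0,\tfrac12)$, let $m=m(n)$ and $p=p(n)\in(\varepsilon,1-\varepsilon)$, let $N_E$ be the number of edges of $\mathcal G(n,m,p)$, $\widetilde N_E=(N_E-\mathbb E[N_E])/\sqrt{\operatorname{Var}[N_E]}$ and $\mathcal N\sim\mathcal N(0,1)$. Then: (1) if $m/\ln n\to0$, then $\widetilde N_E\xrightarrow{\mathcal D}\mathcal N$; (2) if $m/\ln n\to\infty$, then $\widetilde N_E$ does not converge in distribution to $\mathcal N$.
   Context: Random intersection graph $\mathcal G(n,m,p)$: vertices $v_1,\ldots,v_n$, attributes $a_1,\ldots,a_m$; each vertex chooses each attribute independently with probability $p$; two vertices are adjacent iff they chose at least one common attribute. Limits are as $n\to\infty$. *)

theory Defs
  imports "HOL-Probability.Probability"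
begin

text \<open>Random intersection graph G(n,m,p): a sample is the incidence relation
  S (i,a) = "vertex i chose attribute a", for i < n, a < m, each pair independently
  with probability p (entries outside the index range are fixed to False).\<close>
definition rig :: "nat \<Rightarrow> nat \<Rightarrow> real \<Rightarrow> (nat \<times> nat \<Rightarrow> bool) pmf" where
  "rig n m p = Pi_pmf ({..<n} \<times> {..<m}) False (\<lambda>_. bernoulli_pmf p)"

definition num_edges :: "nat \<Rightarrow> nat \<Rightarrow> (nat \<times> nat \<Rightarrow> bool) \<Rightarrow> nat" where
  "num_edges n m S = card {(i, j). i < j \<and> j < n \<and> (\<exists>a<m. S (i, a) \<and> S (j, a))}"

definition edges_mean :: "nat \<Rightarrow> nat \<Rightarrow> real \<Rightarrow> real" where
  "edges_mean n m p = measure_pmf.expectation (rig n m p) (\<lambda>S. real (num_edges n m S))"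

definition edges_var :: "nat \<Rightarrow> nat \<Rightarrow> real \<Rightarrow> real" where
  "edges_var n m p = measure_pmf.variance (rig n m p) (\<lambda>S. real (num_edges n m S))"

definition std_edges_distr :: "nat \<Rightarrow> nat \<Rightarrow> real \<Rightarrow> real measure" where
  "std_edges_distr n m p =
     measure_pmf (map_pmf (\<lambda>S. (real (num_edges n m S) - edges_mean n m p) / sqrt (edges_var n m p))
                  (rig n m p))"

end

theory Submission
  imports Defs "HOL-Real_Asymp.Real_Asymp"
begin


lemma finite_set_Pi_pmf:
  assumes "finite A" "\<And>x. x \<in> A \<Longrightarrow> finite (set_pmf (p x))"
  shows "finite (set_pmf (Pi_pmf A d p))"
  using assms by (auto simp: set_Pi_pmf intro!: finite_PiE_dflt)

lemma integral_pair_pmf_fin: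
  fixes F :: "'a \<times> 'b \<Rightarrow> 'c::{banach, second_countable_topology}"
  assumes fa: "finite (set_pmf A)" and fb: "finite (set_pmf B)"
  shows "integral\<^sup>L (measure_pmf (pair_pmf A B)) F =
         integral\<^sup>L (measure_pmf A) (\<lambda>a. integral\<^sup>L (measure_pmf B) (\<lambda>b. F (a,b)))"
proof -
  have "integral\<^sup>L (measure_pmf (pair_pmf A B)) F = (\<Sum>z\<in>set_pmf A \<times> set_pmf B. pmf (pair_pmf A B) z *\<^sub>R F z)"
    by (rule integral_measure_pmf) (use fa fb in auto)
  also have "\<dots> = (\<Sum>a\<in>set_pmf A. \<Sum>b\<in>set_pmf B. pmf A a *\<^sub>R (pmf B b *\<^sub>R F (a,b)))"
    unfolding sum.cartesian_product by (intro sum.cong) (auto simp: pmf_pair)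
  also have "\<dots> = (\<Sum>a\<in>set_pmf A. pmf A a *\<^sub>R (\<Sum>b\<in>set_pmf B. pmf B b *\<^sub>R F (a,b)))"
    by (simp add: scaleR_sum_right)
  also have "\<dots> = (\<Sum>a\<in>set_pmf A. pmf A a *\<^sub>R integral\<^sup>L (measure_pmf B) (\<lambda>b. F (a,b)))"
    by (intro sum.cong refl arg_cong2[where f="(*\<^sub>R)"] integral_measure_pmf[symmetric]) (use fb in auto)
  also have "\<dots> = integral\<^sup>L (measure_pmf A) (\<lambda>a. integral\<^sup>L (measure_pmf B) (\<lambda>b. F (a,b)))"
    by (rule integral_measure_pmf[symmetric]) (use fa in auto)
  finally show ?thesis .
qed

lemma integral_pair_pmf_fin':
  fixes F :: "'a \<times> 'b \<Rightarrow> 'c::{banach, second_countable_topology}"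
  assumes fa: "finite (set_pmf A)" and fb: "finite (set_pmf B)"
  shows "integral\<^sup>L (measure_pmf (pair_pmf A B)) F =
         integral\<^sup>L (measure_pmf B) (\<lambda>b. integral\<^sup>L (measure_pmf A) (\<lambda>a. F (a,b)))"
proof -
  have "pair_pmf A B = map_pmf (\<lambda>(x, y). (y, x)) (pair_pmf B A)"
    by (rule pair_commute_pmf)
  hence "integral\<^sup>L (measure_pmf (pair_pmf A B)) F = integral\<^sup>L (measure_pmf (pair_pmf B A)) (\<lambda>(x,y). F (y,x))"
    by (simp add: case_prod_unfold)
  also have "\<dots> = integral\<^sup>L (measure_pmf B) (\<lambda>b. integral\<^sup>L (measure_pmf A) (\<lambda>a. F (a,b)))"
    by (subst integral_pair_pmf_fin) (use fa fb in auto)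
  finally show ?thesis .
qed

lemma integral_Pi_pmf_out:
  fixes \<Phi> :: "('i \<Rightarrow> 'a) \<Rightarrow> 'c::{banach, second_countable_topology}"
  assumes fin: "finite A" and a: "a \<in> A" and fD: "finite (set_pmf D)"
  shows "integral\<^sup>L (measure_pmf (Pi_pmf A d (\<lambda>_. D))) \<Phi> =
         integral\<^sup>L (measure_pmf (Pi_pmf A d (\<lambda>_. D)))
            (\<lambda>X. integral\<^sup>L (measure_pmf D) (\<lambda>y. \<Phi> (X(a:=y))))"
proof -
  let ?P = "Pi_pmf A d (\<lambda>_. D)"
  let ?Q = "Pi_pmf (A - {a}) d (\<lambda>_. D)"
  have fQ: "finite (set_pmf ?Q)" by (rule finite_set_Pi_pmf) (use fin fD in auto)
  have "A = insert a (A - {a})" using a by auto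
  hence "?P = map_pmf (\<lambda>(y,f). f(a:=y)) (pair_pmf D ?Q)"
    using fin by (metis Diff_iff Pi_pmf_insert finite_Diff insertI1)
  hence "integral\<^sup>L (measure_pmf ?P) \<Phi> = integral\<^sup>L (measure_pmf (pair_pmf D ?Q)) (\<lambda>(y,f). \<Phi> (f(a:=y)))"
    by (simp add: case_prod_unfold)
  also have "\<dots> = integral\<^sup>L (measure_pmf ?Q) (\<lambda>f. integral\<^sup>L (measure_pmf D) (\<lambda>y. \<Phi> (f(a:=y))))"
    by (subst integral_pair_pmf_fin') (use fD fQ in auto)
  also have "?Q = map_pmf (\<lambda>f. f(a := d)) ?P"
    by (rule Pi_pmf_remove) (rule fin)
  also have "integral\<^sup>L (measure_pmf (map_pmf (\<lambda>f. f(a := d)) ?P)) (\<lambda>f. integral\<^sup>L (measure_pmf D) (\<lambda>y. \<Phi> (f(a:=y))))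
     = integral\<^sup>L (measure_pmf ?P) (\<lambda>X. integral\<^sup>L (measure_pmf D) (\<lambda>y. \<Phi> (X(a:=y))))"
    by simp
  finally show ?thesis .
qed

lemma integral_Pi_pmf_component:
  fixes F :: "'a \<Rightarrow> 'c::{banach, second_countable_topology}"
  assumes fin: "finite A" and a: "a \<in> A"
  shows "integral\<^sup>L (measure_pmf (Pi_pmf A d p)) (\<lambda>X. F (X a)) = integral\<^sup>L (measure_pmf (p a)) F"
proof -
  have "map_pmf (\<lambda>f. f a) (Pi_pmf A d p) = p a" using Pi_pmf_component[OF fin, of a d p] a by simp
  hence "integral\<^sup>L (measure_pmf (map_pmf (\<lambda>f. f a) (Pi_pmf A d p))) F = integral\<^sup>L (measure_pmf (p a)) F" by simp
  thus ?thesis by simp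
qed

lemma integral_prod_Pi_pmf_fin:
  fixes f :: "'i \<Rightarrow> 'a \<Rightarrow> 'c::{real_normed_field, banach, second_countable_topology}"
  assumes "finite A" "\<And>x. x \<in> A \<Longrightarrow> finite (set_pmf (p x))"
  shows "integral\<^sup>L (measure_pmf (Pi_pmf A d p)) (\<lambda>y. \<Prod>x\<in>A. f x (y x)) =
         (\<Prod>x\<in>A. integral\<^sup>L (measure_pmf (p x)) (f x))"
  using assms
proof (induction rule: finite_induct)
  case empty
  then show ?case by simp
next
  case (insert x A)
  have fQ: "finite (set_pmf (Pi_pmf A d p))" by (rule finite_set_Pi_pmf) (use insert in auto)
  have fx: "finite (set_pmf (p x))" using insert by auto
  have "integral\<^sup>L (measure_pmf (Pi_pmf (insert x A) d p)) (\<lambda>y. \<Prod>z\<in>insert x A. f z (y z)) =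
        integral\<^sup>L (measure_pmf (pair_pmf (p x) (Pi_pmf A d p))) (\<lambda>(a,b). \<Prod>z\<in>insert x A. f z ((b(x:=a)) z))"
    using insert by (simp add: Pi_pmf_insert case_prod_unfold)
  also have "\<dots> = integral\<^sup>L (measure_pmf (p x)) (\<lambda>a. integral\<^sup>L (measure_pmf (Pi_pmf A d p)) (\<lambda>b. \<Prod>z\<in>insert x A. f z ((b(x:=a)) z)))"
    by (subst integral_pair_pmf_fin) (use fx fQ in auto)
  also have "(\<lambda>a b. \<Prod>z\<in>insert x A. f z ((b(x:=a)) z)) = (\<lambda>a b. f x a * (\<Prod>z\<in>A. f z (b z)))"
  proof (intro ext)
    fix a b
    have "(\<Prod>z\<in>insert x A. f z ((b(x:=a)) z)) = f x a * (\<Prod>z\<in>A. f z ((b(x:=a)) z))"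
      using insert.hyps by (simp add: prod.insert)
    also have "(\<Prod>z\<in>A. f z ((b(x:=a)) z)) = (\<Prod>z\<in>A. f z (b z))"
      using insert.hyps by (intro prod.cong) auto
    finally show "(\<Prod>z\<in>insert x A. f z ((b(x:=a)) z)) = f x a * (\<Prod>z\<in>A. f z (b z))" .
  qed
  also have "integral\<^sup>L (measure_pmf (p x)) (\<lambda>a. integral\<^sup>L (measure_pmf (Pi_pmf A d p)) (\<lambda>b. f x a * (\<Prod>z\<in>A. f z (b z))))
     = integral\<^sup>L (measure_pmf (p x)) (f x) * (\<Prod>z\<in>A. integral\<^sup>L (measure_pmf (p z)) (f z))"
    using insert by simp
  finally show ?case using insert.hyps by simp
qed


locale ustat =
  fixes D :: "'a pmf" and f :: "'a \<Rightarrow> 'a \<Rightarrow> real" and d :: 'a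
  assumes finD: "finite (set_pmf D)"
    and fsym: "\<And>x y. f x y = f y x"
    and f0: "\<And>x y. 0 \<le> f x y" and f1: "\<And>x y. f x y \<le> 1"
begin

abbreviation ED :: "('a \<Rightarrow> real) \<Rightarrow> real" where
  "ED F \<equiv> integral\<^sup>L (measure_pmf D) F"

definition PP :: "nat \<Rightarrow> (nat \<Rightarrow> 'a) pmf" where
  "PP n = Pi_pmf {..<n} d (\<lambda>_. D)"

abbreviation EP :: "nat \<Rightarrow> ((nat \<Rightarrow> 'a) \<Rightarrow> 'b::{banach, second_countable_topology}) \<Rightarrow> 'b" where
  "EP n F \<equiv> integral\<^sup>L (measure_pmf (PP n)) F"

definition g :: "'a \<Rightarrow> real" where "g x = ED (\<lambda>y. f x y)"
definition theta :: real where "theta = ED g"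
definition h :: "'a \<Rightarrow> real" where "h x = g x - theta"
definition ft :: "'a \<Rightarrow> 'a \<Rightarrow> real" where "ft x y = f x y - h x - h y - theta"
definition s :: real where "s = ED (\<lambda>x. (h x)^2)"

definition Pairs :: "nat \<Rightarrow> (nat \<times> nat) set" where "Pairs n = {(i,j). i < j \<and> j < n}"

definition N :: "nat \<Rightarrow> (nat \<Rightarrow> 'a) \<Rightarrow> real" where
  "N n X = (\<Sum>(i,j)\<in>Pairs n. f (X i) (X j))"
definition Lin :: "nat \<Rightarrow> (nat \<Rightarrow> 'a) \<Rightarrow> real" where
  "Lin n X = (real n - 1) * (\<Sum>i<n. h (X i))"
definition R :: "nat \<Rightarrow> (nat \<Rightarrow> 'a) \<Rightarrow> real" where
  "R n X = (\<Sum>(i,j)\<in>Pairs n. ft (X i) (X j))"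

lemma finite_Pairs [simp]: "finite (Pairs n)"
  by (rule finite_subset[of _ "{..<n} \<times> {..<n}"]) (auto simp: Pairs_def)

lemma finPP: "finite (set_pmf (PP n))"
  unfolding PP_def by (rule finite_set_Pi_pmf) (auto simp: finD)

lemma intD [simp, intro]: "integrable (measure_pmf D) (F :: 'a \<Rightarrow> 'b::{banach, second_countable_topology})"
  by (rule integrable_measure_pmf_finite) (rule finD)

lemma intP [simp, intro]: "integrable (measure_pmf (PP n)) (F :: _ \<Rightarrow> 'b::{banach, second_countable_topology})"
  by (rule integrable_measure_pmf_finite) (rule finPP)

lemma g01: "0 \<le> g x" "g x \<le> 1"
  unfolding g_def
  by (auto intro!: measure_pmf.integral_ge_const measure_pmf.integral_le_const f0 f1)

lemma theta01: "0 \<le> theta" "theta \<le> 1"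
  unfolding theta_def
  by (auto intro!: measure_pmf.integral_ge_const measure_pmf.integral_le_const g01)

lemma Eh: "ED h = 0"
  unfolding h_def by (simp add: theta_def)

lemma ft_sym: "ft x y = ft y x"
  unfolding ft_def by (simp add: fsym)

lemma Eft: "ED (\<lambda>y. ft x y) = 0"
proof -
  have "ED (\<lambda>y. ft x y) = ED (\<lambda>y. f x y) - ED (\<lambda>y. h x) - ED h - ED (\<lambda>y. theta)"
    unfolding ft_def by simp
  also have "\<dots> = 0" using Eh by (simp add: g_def[symmetric] h_def)
  finally show ?thesis .
qed

lemma Eft': "ED (\<lambda>y. ft y x) = 0"
  using Eft[of x] by (simp add: ft_sym)

lemma ft_bound: "(ft x y)^2 \<le> 4"
proof -
  have "\<bar>ft x y\<bar> \<le> 2" unfolding ft_def h_def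
    using g01[of x] g01[of y] theta01 f0[of x y] f1[of x y] by auto
  hence "\<bar>ft x y\<bar>^2 \<le> 2^2" by (intro power_mono) auto
  thus ?thesis by simp
qed

lemma h_bound: "\<bar>h x\<bar> \<le> 1"
  unfolding h_def using g01[of x] theta01 by auto

lemma s_nonneg: "0 \<le> s"
  unfolding s_def by (auto intro!: measure_pmf.integral_ge_const)

lemma out_zero:
  fixes \<Phi> :: "(nat \<Rightarrow> 'a) \<Rightarrow> real"
  assumes "a < n" "\<And>X. ED (\<lambda>y. \<Phi> (X(a:=y))) = 0"
  shows "EP n \<Phi> = 0"
proof -
  have "EP n \<Phi> = EP n (\<lambda>X. ED (\<lambda>y. \<Phi> (X(a:=y))))"
    unfolding PP_def by (rule integral_Pi_pmf_out) (use assms finD in auto)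
  also have "\<dots> = 0" using assms by simp
  finally show ?thesis .
qed

lemma comp1: "i < n \<Longrightarrow> EP n (\<lambda>X. F (X i)) = ED F"
  unfolding PP_def by (rule integral_Pi_pmf_component) auto

lemma ft_out:
  assumes "a < n" "i \<noteq> j" "a = i \<or> a = j" "\<And>X y. G (X(a:=y)) = G X"
  shows "EP n (\<lambda>X. ft (X i) (X j) * G X) = 0"
proof (rule out_zero[OF assms(1)])
  fix X
  show "ED (\<lambda>y. ft ((X(a:=y)) i) ((X(a:=y)) j) * G (X(a:=y))) = 0"
    using assms(2,3) by (auto simp: assms(4) Eft Eft')
qed

lemma h_out:
  assumes "a < n" "\<And>X y. G (X(a:=y)) = G X"
  shows "EP n (\<lambda>X. h (X a) * G X) = 0"
proof (rule out_zero[OF assms(1)])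
  fix X
  show "ED (\<lambda>y. h ((X(a:=y)) a) * G (X(a:=y))) = 0"
    by (simp add: assms(2) Eh)
qed

lemma E2: "i < n \<Longrightarrow> j < n \<Longrightarrow> i \<noteq> j \<Longrightarrow> EP n (\<lambda>X. F (X i) (X j)) = ED (\<lambda>x. ED (\<lambda>y. F x y))"
proof -
  assume ij: "i < n" "j < n" "i \<noteq> j"
  have "EP n (\<lambda>X. F (X i) (X j)) = EP n (\<lambda>X. ED (\<lambda>y. F ((X(j:=y)) i) ((X(j:=y)) j)))"
    unfolding PP_def by (rule integral_Pi_pmf_out) (use ij finD in auto)
  also have "\<dots> = EP n (\<lambda>X. ED (\<lambda>y. F (X i) y))" using ij by simp
  also have "\<dots> = ED (\<lambda>x. ED (\<lambda>y. F x y))" by (rule comp1) (fact)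
  finally show ?thesis .
qed

end


context ustat begin

lemma Pairs_Suc: "Pairs (Suc n) = Pairs n \<union> (\<lambda>i. (i,n)) ` {..<n}"
  by (auto simp: Pairs_def less_Suc_eq)

lemma sum_Pairs_add:
  fixes a :: "nat \<Rightarrow> real"
  shows "(\<Sum>(i,j)\<in>Pairs n. a i + a j) = (real n - 1) * (\<Sum>i<n. a i)"
proof (induction n)
  case 0
  then show ?case by (simp add: Pairs_def)
next
  case (Suc n)
  have disj: "Pairs n \<inter> (\<lambda>i. (i,n)) ` {..<n} = {}" by (auto simp: Pairs_def)
  have "(\<Sum>(i,j)\<in>Pairs (Suc n). a i + a j) =
        (\<Sum>(i,j)\<in>Pairs n. a i + a j) + (\<Sum>(i,j)\<in>(\<lambda>i. (i,n)) ` {..<n}. a i + a j)"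
    unfolding Pairs_Suc by (rule sum.union_disjoint) (use disj in auto)
  also have "(\<Sum>(i,j)\<in>(\<lambda>i. (i,n)) ` {..<n}. a i + a j) = (\<Sum>i<n. a i + a n)"
    by (subst sum.reindex) (auto simp: inj_on_def)
  also have "\<dots> = (\<Sum>i<n. a i) + real n * a n" by (simp add: sum.distrib)
  finally show ?case using Suc by (simp add: algebra_simps)
qed

lemma card_Pairs: "real (card (Pairs n)) = real n * (real n - 1) / 2"
proof -
  have "real (card (Pairs n)) = (\<Sum>(i,j)\<in>Pairs n. (\<lambda>_. 1/2::real) i + (\<lambda>_. 1/2) j)" by simp
  also have "\<dots> = (real n - 1) * (\<Sum>i<n. 1/2)" by (rule sum_Pairs_add)
  finally show ?thesis by simp
qed

lemma N_decomp: "N n X = real (card (Pairs n)) * theta + Lin n X + R n X"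
proof -
  have "N n X = (\<Sum>(i,j)\<in>Pairs n. ft (X i) (X j) + (h (X i) + h (X j)) + theta)"
    unfolding N_def by (intro sum.cong refl) (auto simp: ft_def)
  also have "\<dots> = R n X + (\<Sum>(i,j)\<in>Pairs n. h (X i) + h (X j)) + real (card (Pairs n)) * theta"
    unfolding R_def by (simp add: sum.distrib case_prod_unfold)
  also have "(\<Sum>(i,j)\<in>Pairs n. h (X i) + h (X j)) = Lin n X"
    unfolding Lin_def by (rule sum_Pairs_add)
  finally show ?thesis by simp
qed

lemma E_hi: "i < n \<Longrightarrow> EP n (\<lambda>X. h (X i)) = 0"
  using comp1[of i n h] Eh by simp

lemma E_Lin: "EP n (Lin n) = 0"
  unfolding Lin_def by (simp add: E_hi)

lemma E_ftP: "(i,j) \<in> Pairs n \<Longrightarrow> EP n (\<lambda>X. ft (X i) (X j)) = 0"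
  by (subst E2) (auto simp: Pairs_def Eft)

lemma E_R: "EP n (R n) = 0"
  unfolding R_def by (simp add: integral_sum case_prod_unfold E_ftP)

lemma E_N: "EP n (N n) = real (card (Pairs n)) * theta"
proof -
  have eq: "N n = (\<lambda>X. real (card (Pairs n)) * theta + Lin n X + R n X)"
    by (rule ext) (rule N_decomp)
  have 1: "EP n (\<lambda>X. real (card (Pairs n)) * theta + Lin n X + R n X) = EP n (\<lambda>X. real (card (Pairs n)) * theta + Lin n X) + EP n (R n)"
    by (rule Bochner_Integration.integral_add[OF intP intP])
  have 2: "EP n (\<lambda>X. real (card (Pairs n)) * theta + Lin n X) = EP n (\<lambda>X. real (card (Pairs n)) * theta) + EP n (Lin n)"
    by (rule Bochner_Integration.integral_add[OF intP intP])
  have 3: "EP n (\<lambda>X. real (card (Pairs n)) * theta) = real (card (Pairs n)) * theta"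
    by (simp add: measure_pmf.prob_space)
  show ?thesis unfolding eq 1 2 3 E_Lin E_R by simp
qed

lemma E_hh: "i < n \<Longrightarrow> j < n \<Longrightarrow> EP n (\<lambda>X. h (X i) * h (X j)) = (if i = j then s else 0)"
proof -
  assume ij: "i < n" "j < n"
  show ?thesis
  proof (cases "i = j")
    case True
    then show ?thesis using comp1[of i n "\<lambda>x. (h x)^2"] ij by (simp add: s_def power2_eq_square)
  next
    case False
    then show ?thesis using h_out[of i n "\<lambda>X. h (X j)"] ij by simp
  qed
qed

lemma E_Lin2: "EP n (\<lambda>X. (Lin n X)^2) = (real n - 1)^2 * (real n * s)"
proof -
  have "(\<lambda>X. (Lin n X)^2) = (\<lambda>X. (real n - 1)^2 * (\<Sum>i<n. \<Sum>j<n. h (X i) * h (X j)))"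
    unfolding Lin_def by (intro ext) (simp add: power_mult_distrib power2_eq_square sum_product)
  hence "EP n (\<lambda>X. (Lin n X)^2) = (real n - 1)^2 * EP n (\<lambda>X. (\<Sum>i<n. \<Sum>j<n. h (X i) * h (X j)))"
    by simp
  also have "EP n (\<lambda>X. (\<Sum>i<n. \<Sum>j<n. h (X i) * h (X j))) = (\<Sum>i<n. \<Sum>j<n. EP n (\<lambda>X. h (X i) * h (X j)))"
    by (simp add: integral_sum)
  also have "\<dots> = (\<Sum>i<n. \<Sum>j<n. (if i = j then s else 0))"
    by (intro sum.cong refl) (simp add: E_hh)
  also have "\<dots> = real n * s" by simp
  finally show ?thesis .
qed

lemma E_h_ft: "k < n \<Longrightarrow> (i,j) \<in> Pairs n \<Longrightarrow> EP n (\<lambda>X. h (X k) * ft (X i) (X j)) = 0"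
proof -
  assume k: "k < n" and P: "(i,j) \<in> Pairs n"
  hence ij: "i < j" "j < n" by (auto simp: Pairs_def)
  have "EP n (\<lambda>X. h (X k) * ft (X i) (X j)) = EP n (\<lambda>X. ft (X i) (X j) * h (X k))"
    by (simp add: mult.commute)
  also have "\<dots> = 0"
  proof (cases "k = i")
    case True
    show ?thesis by (rule ft_out[of j]) (use ij True in auto)
  next
    case False
    show ?thesis by (rule ft_out[of i]) (use ij False in auto)
  qed
  finally show ?thesis .
qed

lemma E_LinR: "EP n (\<lambda>X. Lin n X * R n X) = 0"
proof -
  have "(\<lambda>X. Lin n X * R n X) = (\<lambda>X.
     (real n - 1) * (\<Sum>k<n. \<Sum>P\<in>Pairs n. h (X k) * ft (X (fst P)) (X (snd P))))"
    unfolding Lin_def R_def by (intro ext) (simp add: sum_product case_prod_unfold)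
  hence "EP n (\<lambda>X. Lin n X * R n X) =
     (real n - 1) * (\<Sum>k<n. \<Sum>P\<in>Pairs n. EP n (\<lambda>X. h (X k) * ft (X (fst P)) (X (snd P))))"
    by (simp add: integral_sum)
  also have "\<dots> = 0"
    by (auto intro!: sum.neutral E_h_ft)
  finally show ?thesis .
qed

lemma Pairs_diff:
  assumes "(i,j) \<in> Pairs n" "(k,l) \<in> Pairs n" "(i,j) \<noteq> (k,l)"
  shows "i \<notin> {k,l} \<or> j \<notin> {k,l} \<or> k \<notin> {i,j} \<or> l \<notin> {i,j}"
  using assms by (auto simp: Pairs_def)

lemma E_ftft:
  assumes P: "(i,j) \<in> Pairs n" and Q: "(k,l) \<in> Pairs n"
  shows "EP n (\<lambda>X. ft (X i) (X j) * ft (X k) (X l)) = (if (i,j) = (k,l) then EP n (\<lambda>X. (ft (X i) (X j))^2) else 0)"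
proof (cases "(i,j) = (k,l)")
  case True
  then show ?thesis by (simp add: power2_eq_square)
next
  case False
  from P Q have ij: "i < j" "j < n" "k < l" "l < n" by (auto simp: Pairs_def)
  have comm: "EP n (\<lambda>X. ft (X i) (X j) * ft (X k) (X l)) = EP n (\<lambda>X. ft (X k) (X l) * ft (X i) (X j))"
    by (simp add: mult.commute)
  from Pairs_diff[OF P Q False] have "EP n (\<lambda>X. ft (X i) (X j) * ft (X k) (X l)) = 0"
  proof (elim disjE)
    assume "i \<notin> {k,l}" thus ?thesis by (intro ft_out[of i]) (use ij in auto)
  next
    assume "j \<notin> {k,l}" thus ?thesis by (intro ft_out[of j]) (use ij in auto)
  next
    assume "k \<notin> {i,j}" thus ?thesis unfolding comm by (intro ft_out[of k]) (use ij in auto)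
  next
    assume "l \<notin> {i,j}" thus ?thesis unfolding comm by (intro ft_out[of l]) (use ij in auto)
  qed
  then show ?thesis by (simp only: if_not_P[OF False])
qed

lemma E_R2: "EP n (\<lambda>X. (R n X)^2) = (\<Sum>P\<in>Pairs n. EP n (\<lambda>X. (ft (X (fst P)) (X (snd P)))^2))"
proof -
  have "EP n (\<lambda>X. (R n X)^2) = (\<Sum>P\<in>Pairs n. \<Sum>Q\<in>Pairs n. EP n (\<lambda>X. ft (X (fst P)) (X (snd P)) * ft (X (fst Q)) (X (snd Q))))"
  proof -
    have "(\<lambda>X. (R n X)^2) = (\<lambda>X. \<Sum>P\<in>Pairs n. \<Sum>Q\<in>Pairs n. ft (X (fst P)) (X (snd P)) * ft (X (fst Q)) (X (snd Q)))"
      unfolding R_def by (intro ext) (simp add: power2_eq_square sum_product case_prod_unfold)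
    thus ?thesis by (simp add: integral_sum)
  qed
  also have "\<dots> = (\<Sum>P\<in>Pairs n. \<Sum>Q\<in>Pairs n. if P = Q then EP n (\<lambda>X. (ft (X (fst P)) (X (snd P)))^2) else 0)"
  proof (intro sum.cong refl)
    fix P Q assume PQ: "P \<in> Pairs n" "Q \<in> Pairs n"
    obtain i j where P: "P = (i,j)" by (cases P)
    obtain k l where Q: "Q = (k,l)" by (cases Q)
    show "EP n (\<lambda>X. ft (X (fst P)) (X (snd P)) * ft (X (fst Q)) (X (snd Q))) =
          (if P = Q then EP n (\<lambda>X. (ft (X (fst P)) (X (snd P)))^2) else 0)"
      using E_ftft[of i j n k l] PQ unfolding P Q by simp
  qed
  also have "\<dots> = (\<Sum>P\<in>Pairs n. EP n (\<lambda>X. (ft (X (fst P)) (X (snd P)))^2))"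
    by (simp add: sum.delta)
  finally show ?thesis .
qed

lemma E_R2_bounds: "0 \<le> EP n (\<lambda>X. (R n X)^2)" "EP n (\<lambda>X. (R n X)^2) \<le> 4 * real (card (Pairs n))"
proof -
  show "0 \<le> EP n (\<lambda>X. (R n X)^2)" by simp
  have "EP n (\<lambda>X. (R n X)^2) \<le> (\<Sum>P\<in>Pairs n. 4)"
    unfolding E_R2 by (intro sum_mono measure_pmf.integral_le_const) (auto simp: ft_bound)
  thus "EP n (\<lambda>X. (R n X)^2) \<le> 4 * real (card (Pairs n))" by simp
qed

lemma centered: "N n X - EP n (N n) = Lin n X + R n X"
  using N_decomp[of n X] E_N[of n] by simp

lemma var_N: "EP n (\<lambda>X. (N n X - EP n (N n))^2) = (real n - 1)^2 * (real n * s) + EP n (\<lambda>X. (R n X)^2)"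
proof -
  have "EP n (\<lambda>X. (N n X - EP n (N n))^2) = EP n (\<lambda>X. (Lin n X)^2 + 2 * (Lin n X * R n X) + (R n X)^2)"
    by (simp add: centered power2_eq_square algebra_simps)
  also have "\<dots> = EP n (\<lambda>X. (Lin n X)^2) + 2 * EP n (\<lambda>X. Lin n X * R n X) + EP n (\<lambda>X. (R n X)^2)"
    by simp
  finally show ?thesis by (simp add: E_Lin2 E_LinR)
qed

end


lemma iexp_taylor2: "cmod (iexp y - (1 + \<i> * complex_of_real y - complex_of_real (y^2 / 2))) \<le> \<bar>y\<bar>^3 / 6"
proof -
  have "cmod (iexp y - (\<Sum>k \<le> 2. (\<i> * y)^k / fact k)) \<le> \<bar>y\<bar>^(Suc 2) / fact (Suc 2)"
    by (rule iexp_approx1)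
  also have "(\<Sum>k \<le> 2. (\<i> * y)^k / fact k) = 1 + \<i> * complex_of_real y - complex_of_real (y^2 / 2)"
    by (simp add: numeral_eq_Suc complex_eq_iff power2_eq_square)
  also have "\<bar>y\<bar>^(Suc 2) / fact (Suc 2) = \<bar>y\<bar>^3 / 6"
    by (simp add: numeral_eq_Suc)
  finally show ?thesis .
qed

lemma iexp_lipschitz: "cmod (iexp a - iexp b) \<le> \<bar>a - b\<bar>"
proof -
  have "iexp a - iexp b = iexp b * (iexp (a - b) - 1)"
    by (simp add: algebra_simps flip: exp_add)
  hence "cmod (iexp a - iexp b) = cmod (iexp (a - b) - 1)"
    by (simp add: norm_mult)
  also have "cmod (iexp (a - b) - 1) = cmod (iexp (a - b) - (\<Sum>k \<le> 0. (\<i> * (a-b))^k / fact k))" by simp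
  also have "\<dots> \<le> \<bar>a - b\<bar>^(Suc 0) / fact (Suc 0)" by (rule iexp_approx1)
  finally show ?thesis by simp
qed

lemma char_one_approx:
  fixes D :: "'a pmf" and hh :: "'a \<Rightarrow> real"
  assumes finD: "finite (set_pmf D)" and hb: "\<And>x. \<bar>hh x\<bar> \<le> 1"
    and m0: "integral\<^sup>L (measure_pmf D) hh = 0"
  shows "cmod (integral\<^sup>L (measure_pmf D) (\<lambda>x. iexp (u * hh x)) -
           complex_of_real (1 - u^2 * integral\<^sup>L (measure_pmf D) (\<lambda>x. (hh x)^2) / 2))
         \<le> \<bar>u\<bar>^3 * integral\<^sup>L (measure_pmf D) (\<lambda>x. (hh x)^2) / 6"
proof -
  have int: "integrable (measure_pmf D) F" for F :: "'a \<Rightarrow> 'b::{banach, second_countable_topology}"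
    by (rule integrable_measure_pmf_finite) (rule finD)
  let ?T = "\<lambda>x. 1 + \<i> * complex_of_real (u * hh x) - complex_of_real ((u * hh x)^2 / 2)"
  have T_eq: "?T x = complex_of_real (1 - (u^2/2) * (hh x)^2) + \<i> * complex_of_real u * complex_of_real (hh x)" for x
    by (simp add: power_mult_distrib algebra_simps)
  have ET: "integral\<^sup>L (measure_pmf D) ?T = complex_of_real (1 - u^2 * integral\<^sup>L (measure_pmf D) (\<lambda>x. (hh x)^2) / 2)"
  proof -
    have "integral\<^sup>L (measure_pmf D) ?T = integral\<^sup>L (measure_pmf D) (\<lambda>x. complex_of_real (1 - (u^2/2) * (hh x)^2))
            + integral\<^sup>L (measure_pmf D) (\<lambda>x. \<i> * complex_of_real u * complex_of_real (hh x))"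
      unfolding T_eq by (rule Bochner_Integration.integral_add[OF int int])
    also have "integral\<^sup>L (measure_pmf D) (\<lambda>x. \<i> * complex_of_real u * complex_of_real (hh x)) = 0"
      using m0 by simp
    also have "integral\<^sup>L (measure_pmf D) (\<lambda>x. (1 - (u^2/2) * (hh x)^2)) = 1 - (u^2/2) * integral\<^sup>L (measure_pmf D) (\<lambda>x. (hh x)^2)"
      by (simp add: Bochner_Integration.integral_diff[OF int int] measure_pmf.prob_space)
    hence "integral\<^sup>L (measure_pmf D) (\<lambda>x. complex_of_real (1 - (u^2/2) * (hh x)^2)) = complex_of_real (1 - (u^2/2) * integral\<^sup>L (measure_pmf D) (\<lambda>x. (hh x)^2))"
      by (simp only: integral_complex_of_real)
    finally show ?thesis by simp
  qed
  have "integral\<^sup>L (measure_pmf D) (\<lambda>x. iexp (u * hh x)) - complex_of_real (1 - u^2 * integral\<^sup>L (measure_pmf D) (\<lambda>x. (hh x)^2) / 2)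
      = integral\<^sup>L (measure_pmf D) (\<lambda>x. iexp (u * hh x) - ?T x)"
    using Bochner_Integration.integral_diff[OF int int, of "\<lambda>x. iexp (u * hh x)" ?T] ET by (simp only:)
  also have "cmod \<dots> \<le> integral\<^sup>L (measure_pmf D) (\<lambda>x. cmod (iexp (u * hh x) - ?T x))"
    by (rule integral_norm_bound)
  also have "\<dots> \<le> integral\<^sup>L (measure_pmf D) (\<lambda>x. \<bar>u\<bar>^3 * (hh x)^2 / 6)"
  proof (rule integral_mono)
    fix x
    have "cmod (iexp (u * hh x) - ?T x) \<le> \<bar>u * hh x\<bar>^3 / 6" by (rule iexp_taylor2)
    also have "\<bar>u * hh x\<bar>^3 = \<bar>u\<bar>^3 * \<bar>hh x\<bar>^3"
      by (simp add: abs_mult power_mult_distrib)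
    also have "\<bar>hh x\<bar>^3 = (hh x)^2 * \<bar>hh x\<bar>"
      by (cases "hh x \<ge> 0") (simp_all add: power3_eq_cube power2_eq_square)
    also have "\<bar>u\<bar>^3 * ((hh x)^2 * \<bar>hh x\<bar>) \<le> \<bar>u\<bar>^3 * ((hh x)^2 * 1)"
      using hb[of x] by (intro mult_left_mono) auto
    finally show "cmod (iexp (u * hh x) - ?T x) \<le> \<bar>u\<bar>^3 * (hh x)^2 / 6" by simp
  qed (auto simp: int)
  also have "\<dots> = \<bar>u\<bar>^3 * integral\<^sup>L (measure_pmf D) (\<lambda>x. (hh x)^2) / 6"
    by simp
  finally show ?thesis .
qed

lemma char_sum_Pi:
  fixes D :: "'a pmf" and hh :: "'a \<Rightarrow> real"
  assumes finD: "finite (set_pmf D)"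
  shows "integral\<^sup>L (measure_pmf (Pi_pmf {..<n} d (\<lambda>_. D))) (\<lambda>X. iexp (u * (\<Sum>i<n. hh (X i))))
         = (integral\<^sup>L (measure_pmf D) (\<lambda>x. iexp (u * hh x)))^n"
proof -
  have "(\<lambda>X. iexp (u * (\<Sum>i<n. hh (X i)))) = (\<lambda>X. \<Prod>i\<in>{..<n}. (\<lambda>_ x. iexp (u * hh x)) i (X i))"
  proof (intro ext)
    fix X :: "nat \<Rightarrow> 'a"
    have "\<i> * complex_of_real (u * (\<Sum>i<n. hh (X i))) = (\<Sum>i<n. \<i> * complex_of_real (u * hh (X i)))"
      by (simp add: sum_distrib_left)
    thus "iexp (u * (\<Sum>i<n. hh (X i))) = (\<Prod>i\<in>{..<n}. (\<lambda>_ x. iexp (u * hh x)) i (X i))"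
      by (simp only: exp_sum[OF finite_lessThan])
  qed
  hence "integral\<^sup>L (measure_pmf (Pi_pmf {..<n} d (\<lambda>_. D))) (\<lambda>X. iexp (u * (\<Sum>i<n. hh (X i))))
     = (\<Prod>i\<in>{..<n}. integral\<^sup>L (measure_pmf D) (\<lambda>x. iexp (u * hh x)))"
    by (simp only:) (rule integral_prod_Pi_pmf_fin, auto simp: finD)
  thus ?thesis by simp
qed


lemma clt_tri:
  fixes D :: "nat \<Rightarrow> 'a pmf" and hh :: "nat \<Rightarrow> 'a \<Rightarrow> real" and c ss :: "nat \<Rightarrow> real" and d :: 'a
  assumes finD: "\<And>n. finite (set_pmf (D n))" and hb: "\<And>n x. \<bar>hh n x\<bar> \<le> 1"
    and m0: "\<And>n. integral\<^sup>L (measure_pmf (D n)) (hh n) = 0"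
    and ssd: "\<And>n. ss n = integral\<^sup>L (measure_pmf (D n)) (\<lambda>x. (hh n x)^2)"
    and lim: "filterlim (\<lambda>n. real n * ss n) at_top sequentially"
    and c: "c \<longlonglongrightarrow> 1"
  shows "(\<lambda>n. integral\<^sup>L (measure_pmf (Pi_pmf {..<n} d (\<lambda>_. D n)))
            (\<lambda>X. iexp (t * (c n * (\<Sum>i<n. hh n (X i)) / sqrt (real n * ss n)))))
         \<longlonglongrightarrow> complex_of_real (exp (-(t^2)/2))"
proof -
  define u where "u n = t * c n / sqrt (real n * ss n)" for n
  define \<phi> where "\<phi> n = integral\<^sup>L (measure_pmf (D n)) (\<lambda>x. iexp (u n * hh n x))" for n
  define z where "z n = complex_of_real (1 - u n ^ 2 * ss n / 2)" for n
  define yv where "yv n = - ((t * c n)^2) / 2" for n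
  define x where "x = - (t^2) / 2"
  define w where "w n = complex_of_real ((1 + x / real n) ^ n)" for n
  have seq: "integral\<^sup>L (measure_pmf (Pi_pmf {..<n} d (\<lambda>_. D n)))
            (\<lambda>X. iexp (t * (c n * (\<Sum>i<n. hh n (X i)) / sqrt (real n * ss n)))) = \<phi> n ^ n" for n
  proof -
    have eqn: "(\<lambda>X. iexp (t * (c n * (\<Sum>i<n. hh n (X i)) / sqrt (real n * ss n)))) =
          (\<lambda>X. iexp (u n * (\<Sum>i<n. hh n (X i))))"
      by (intro ext arg_cong[where f=iexp]) (simp add: u_def field_simps)
    show ?thesis unfolding eqn \<phi>_def by (rule char_sum_Pi[OF finD])
  qed
  have ev_pos: "eventually (\<lambda>n. real n * ss n \<ge> 1) sequentially"
    using lim by (simp add: filterlim_at_top)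
  have ev_c: "eventually (\<lambda>n. \<bar>c n\<bar> \<le> 2) sequentially"
  proof -
    have "eventually (\<lambda>n. dist (c n) 1 < 1) sequentially"
      using c by (simp add: tendsto_iff)
    thus ?thesis by eventually_elim (auto simp: dist_real_def)
  qed
  have ev_n: "eventually (\<lambda>n. real n \<ge> 4 * t^2 + 1) sequentially"
    by (rule eventually_sequentiallyI[of "nat \<lceil>4 * t^2 + 1\<rceil>"]) linarith
  have key: "eventually (\<lambda>n. u n ^ 2 * ss n = (t * c n)^2 / real n \<and> (t * c n)^2 / real n \<le> 1
              \<and> t^2 / real n \<le> 1 \<and> real n > 0) sequentially"
    using ev_pos ev_c ev_n
  proof eventually_elim
    case (elim n)
    have npos: "real n > 0" using elim(3) by (smt (verit) zero_le_power2)
    have sspos: "ss n > 0" using elim(1) npos by (smt (verit) mult_nonneg_nonpos of_nat_0_le_iff)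
    have "u n ^ 2 * ss n = t^2 * (c n)^2 / (real n * ss n) * ss n"
      using npos sspos by (simp add: u_def power_divide power_mult_distrib)
    also have "\<dots> = (t * c n)^2 / real n" using sspos by (simp add: power_mult_distrib)
    finally have 1: "u n ^ 2 * ss n = (t * c n)^2 / real n" .
    have "(c n)^2 \<le> 2^2" using elim(2) by (metis abs_le_square_iff abs_numeral)
    hence "(t * c n)^2 \<le> t^2 * 4" by (simp add: power_mult_distrib mult_left_mono)
    also have "\<dots> \<le> real n" using elim(3) by simp
    finally have 2: "(t * c n)^2 / real n \<le> 1" using npos by simp
    have 3: "t^2 / real n \<le> 1" using elim(3) npos by simp
    show ?case using 1 2 3 npos by simp
  qed
  have b1: "eventually (\<lambda>n. cmod (\<phi> n ^ n - z n ^ n) \<le> \<bar>t * c n\<bar>^3 / 6 / sqrt (real n * ss n)) sequentially"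
    using key ev_pos
  proof eventually_elim
    case (elim n)
    have npos: "real n > 0" and sspos: "ss n > 0"
      using elim by (auto, smt (verit) mult_nonneg_nonpos of_nat_0_le_iff)
    have nphi: "norm (\<phi> n) \<le> 1"
    proof -
      have "norm (\<phi> n) \<le> integral\<^sup>L (measure_pmf (D n)) (\<lambda>y. norm (iexp (u n * hh n y)))"
        unfolding \<phi>_def by (rule integral_norm_bound)
      also have "\<dots> = 1" by (simp add: measure_pmf.prob_space)
      finally show ?thesis .
    qed
    have r: "0 \<le> u n ^ 2 * ss n / 2" "u n ^ 2 * ss n / 2 \<le> 1"
      using elim(1) npos by (auto simp: zero_le_divide_iff)
    have nz: "norm (z n) \<le> 1"
      unfolding z_def norm_of_real using r by (simp only: abs_le_iff) linarith
    have "cmod (\<phi> n ^ n - z n ^ n) \<le> real n * cmod (\<phi> n - z n)"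
      by (rule norm_power_diff[OF nphi nz])
    also have "cmod (\<phi> n - z n) \<le> \<bar>u n\<bar>^3 * ss n / 6"
      unfolding \<phi>_def z_def ssd by (rule char_one_approx[OF finD hb m0])
    also have "real n * (\<bar>u n\<bar>^3 * ss n / 6) = \<bar>t * c n\<bar>^3 / 6 / sqrt (real n * ss n)"
    proof -
      have sq: "sqrt (real n * ss n) ^ 2 = real n * ss n" using npos sspos by simp
      have sqp: "sqrt (real n * ss n) > 0" using npos sspos by simp
      have "\<bar>u n\<bar>^3 = \<bar>t * c n\<bar>^3 / sqrt (real n * ss n) ^ 3"
        unfolding u_def using sqp by (simp add: abs_mult power_divide)
      also have "sqrt (real n * ss n) ^ 3 = (real n * ss n) * sqrt (real n * ss n)"
        using sq by (simp add: power3_eq_cube power2_eq_square)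
      finally show ?thesis using npos sspos sqp by (simp add: field_simps)
    qed
    finally show ?case using npos by (simp add: mult_left_mono)
  qed
  have l1: "(\<lambda>n. \<bar>t * c n\<bar>^3 / 6 / sqrt (real n * ss n)) \<longlonglongrightarrow> 0"
  proof (rule tendsto_divide_0)
    show "(\<lambda>n. \<bar>t * c n\<bar>^3 / 6) \<longlonglongrightarrow> \<bar>t * 1\<bar>^3 / 6" by (intro tendsto_intros c) simp_all
    show "filterlim (\<lambda>n. sqrt (real n * ss n)) at_infinity sequentially"
      by (rule filterlim_at_top_imp_at_infinity, rule filterlim_compose[OF sqrt_at_top lim])
  qed
  have b2: "eventually (\<lambda>n. cmod (z n ^ n - w n) \<le> \<bar>yv n - x\<bar>) sequentially"
    using key
  proof eventually_elim
    case (elim n)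
    have npos: "real n > 0" using elim by auto
    have zeq: "z n = complex_of_real (1 + yv n / real n)"
      unfolding z_def yv_def using elim by simp
    have r1: "0 \<le> (t * c n)^2 / real n / 2" "(t * c n)^2 / real n / 2 \<le> 1"
      using elim npos by (auto simp: zero_le_divide_iff)
    have r2: "0 \<le> t^2 / real n / 2" "t^2 / real n / 2 \<le> 1"
      using elim npos by (auto simp: zero_le_divide_iff)
    have e1: "yv n / real n = - ((t * c n)^2 / real n / 2)" unfolding yv_def by simp
    have e2: "x / real n = - (t^2 / real n / 2)" unfolding x_def by simp
    have n1: "norm (complex_of_real (1 + yv n / real n)) \<le> 1"
      unfolding norm_of_real e1 using r1 by (simp only: abs_le_iff) linarith
    have n2: "norm (complex_of_real (1 + x / real n)) \<le> 1"
      unfolding norm_of_real e2 using r2 by (simp only: abs_le_iff) linarith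
    have "cmod (z n ^ n - w n) = cmod (complex_of_real (1 + yv n / real n) ^ n - complex_of_real (1 + x / real n) ^ n)"
      unfolding zeq w_def by simp
    also have "\<dots> \<le> real n * cmod (complex_of_real (1 + yv n / real n) - complex_of_real (1 + x / real n))"
      by (rule norm_power_diff[OF n1 n2])
    also have "\<dots> = \<bar>yv n - x\<bar>"
    proof -
      have dd: "complex_of_real (1 + yv n / real n) - complex_of_real (1 + x / real n) = complex_of_real ((yv n - x) / real n)"
        by (subst of_real_diff[symmetric], rule arg_cong[where f=complex_of_real], simp add: diff_divide_distrib)
      show ?thesis unfolding dd norm_of_real using npos by (simp add: abs_divide)
    qed
    finally show ?case .
  qed
  have l2: "(\<lambda>n. \<bar>yv n - x\<bar>) \<longlonglongrightarrow> 0"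
  proof -
    have "yv \<longlonglongrightarrow> - ((t * 1)^2) / 2" unfolding yv_def by (intro tendsto_intros c) simp_all
    hence "(\<lambda>n. yv n - x) \<longlonglongrightarrow> 0" unfolding x_def using LIM_zero by force
    thus ?thesis using tendsto_rabs_zero by blast
  qed
  have l3: "w \<longlonglongrightarrow> complex_of_real (exp x)"
    unfolding w_def by (rule tendsto_of_real, rule tendsto_exp_limit_sequentially)
  have d1: "(\<lambda>n. \<phi> n ^ n - z n ^ n) \<longlonglongrightarrow> 0"
    by (rule Lim_null_comparison[OF b1 l1])
  have d2: "(\<lambda>n. z n ^ n - w n) \<longlonglongrightarrow> 0"
    by (rule Lim_null_comparison[OF b2 l2])
  have "(\<lambda>n. (\<phi> n ^ n - z n ^ n) + (z n ^ n - w n) + w n) \<longlonglongrightarrow> 0 + 0 + complex_of_real (exp x)"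
    by (intro tendsto_add d1 d2 l3)
  hence "(\<lambda>n. \<phi> n ^ n) \<longlonglongrightarrow> complex_of_real (exp x)" by simp
  thus ?thesis unfolding seq x_def by simp
qed


definition DD :: "nat \<Rightarrow> real \<Rightarrow> (nat \<Rightarrow> bool) pmf" where
  "DD m p = Pi_pmf {..<m} False (\<lambda>_. bernoulli_pmf p)"

definition ff :: "nat \<Rightarrow> (nat \<Rightarrow> bool) \<Rightarrow> (nat \<Rightarrow> bool) \<Rightarrow> real" where
  "ff m x y = (if \<exists>a<m. x a \<and> y a then 1 else 0)"

lemma finDD: "finite (set_pmf (DD m p))"
  unfolding DD_def by (rule finite_set_Pi_pmf) auto

lemma ustat_inst: "ustat (DD m p) (ff m)"
  by unfold_locales (auto simp: finDD ff_def)

lemma rig_eq: "rig n m p = map_pmf case_prod (Pi_pmf {..<n} (\<lambda>_. False) (\<lambda>_. DD m p))"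
proof (rule pmf_eqI)
  fix S :: "nat \<times> nat \<Rightarrow> bool"
  have inj: "inj (case_prod :: (nat \<Rightarrow> nat \<Rightarrow> bool) \<Rightarrow> _)"
    by (intro injI) (metis curry_case_prod)
  have "pmf (map_pmf case_prod (Pi_pmf {..<n} (\<lambda>_. False) (\<lambda>_. DD m p))) S =
        pmf (map_pmf case_prod (Pi_pmf {..<n} (\<lambda>_. False) (\<lambda>_. DD m p))) (case_prod (curry S))"
    by simp
  also have "\<dots> = pmf (Pi_pmf {..<n} (\<lambda>_. False) (\<lambda>_. DD m p)) (curry S)"
    by (rule pmf_map_inj'[OF inj])
  also have "\<dots> = pmf (rig n m p) S"
  proof (cases "\<forall>z. z \<notin> {..<n} \<times> {..<m} \<longrightarrow> S z = False")
    case True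
    have "pmf (rig n m p) S = (\<Prod>z\<in>{..<n} \<times> {..<m}. pmf (bernoulli_pmf p) (S z))"
      unfolding rig_def using True by (subst pmf_Pi) auto
    also have "\<dots> = (\<Prod>i<n. \<Prod>a<m. pmf (bernoulli_pmf p) (S (i,a)))"
      by (simp add: prod.cartesian_product)
    also have "\<dots> = (\<Prod>i<n. pmf (DD m p) (curry S i))"
      unfolding DD_def using True by (intro prod.cong refl, subst pmf_Pi) auto
    also have "\<dots> = pmf (Pi_pmf {..<n} (\<lambda>_. False) (\<lambda>_. DD m p)) (curry S)"
      using True by (subst pmf_Pi) (auto simp: fun_eq_iff)
    finally show ?thesis by simp
  next
    case False
    then obtain i a where ia: "(i,a) \<notin> {..<n} \<times> {..<m}" "S (i,a)" by auto
    have l: "pmf (rig n m p) S = 0"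
      unfolding rig_def using ia by (subst pmf_Pi) auto
    have r: "pmf (Pi_pmf {..<n} (\<lambda>_. False) (\<lambda>_. DD m p)) (curry S) = 0"
    proof (cases "i < n")
      case True
      with ia have am: "\<not> a < m" by auto
      have "pmf (DD m p) (curry S i) = 0"
        unfolding DD_def using am ia by (subst pmf_Pi) auto
      hence "(\<Prod>j<n. pmf (DD m p) (curry S j)) = 0"
        using True by (intro prod_zero) auto
      thus ?thesis by (subst pmf_Pi) auto
    next
      case False
      have "curry S i \<noteq> (\<lambda>_. False)" using ia by (auto simp: fun_eq_iff)
      thus ?thesis using False by (subst pmf_Pi) auto
    qed
    show ?thesis using l r by simp
  qed
  finally show "pmf (rig n m p) S = pmf (map_pmf case_prod (Pi_pmf {..<n} (\<lambda>_. False) (\<lambda>_. DD m p))) S" by simp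
qed

lemma num_edges_eq: "real (num_edges n m (case_prod X)) = ustat.N (ff m) n X"
proof -
  have set_eq: "{(i, j). i < j \<and> j < n \<and> (\<exists>a<m. case_prod X (i, a) \<and> case_prod X (j, a))}
     = {z \<in> ustat.Pairs n. \<exists>a<m. X (fst z) a \<and> X (snd z) a}"
    by (auto simp: ustat.Pairs_def[OF ustat_inst[of m 0]])
  have fin: "finite (ustat.Pairs n)"
    by (rule finite_subset[of _ "{..<n} \<times> {..<n}"]) (auto simp: ustat.Pairs_def[OF ustat_inst[of m 0]])
  have "real (num_edges n m (case_prod X)) = real (card {z \<in> ustat.Pairs n. \<exists>a<m. X (fst z) a \<and> X (snd z) a})"
    unfolding num_edges_def set_eq ..
  also have "\<dots> = (\<Sum>z\<in>{z \<in> ustat.Pairs n. \<exists>a<m. X (fst z) a \<and> X (snd z) a}. 1)"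
    by simp
  also have "\<dots> = (\<Sum>z\<in>ustat.Pairs n. if \<exists>a<m. X (fst z) a \<and> X (snd z) a then 1 else 0)"
    by (rule sum.inter_filter[OF fin])
  also have "\<dots> = ustat.N (ff m) n X"
    by (simp add: ustat.N_def[OF ustat_inst[of m 0]] ff_def case_prod_unfold)
  finally show ?thesis .
qed


definition wq :: "nat \<Rightarrow> real \<Rightarrow> (nat \<Rightarrow> bool) \<Rightarrow> real" where
  "wq m p x = (\<Prod>a<m. if x a then 1 - p else 1)"

lemma one_minus_ff: "1 - ff m x y = (\<Prod>a<m. (\<lambda>a b. if x a \<and> b then 0 else 1) a (y a))"
proof (cases "\<exists>a<m. x a \<and> y a")
  case True
  then obtain a where "a < m" "x a \<and> y a" by auto
  hence "(\<Prod>a<m. (\<lambda>a b. if x a \<and> b then 0 else (1::real)) a (y a)) = 0"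
    by (intro prod_zero) auto
  thus ?thesis using True by (simp add: ff_def)
next
  case False
  thus ?thesis by (simp add: ff_def) (auto intro!: prod.neutral)
qed

lemma E_DD_prod:
  fixes F :: "nat \<Rightarrow> bool \<Rightarrow> real"
  assumes "0 \<le> p" "p \<le> 1"
  shows "integral\<^sup>L (measure_pmf (DD m p)) (\<lambda>y. \<Prod>a<m. F a (y a)) = (\<Prod>a<m. F a True * p + F a False * (1 - p))"
  unfolding DD_def
  by (subst integral_prod_Pi_pmf_fin) (use assms in \<open>auto simp: finite_subset[OF subset_UNIV]\<close>)

lemma E_ff_y:
  assumes "0 \<le> p" "p \<le> 1"
  shows "integral\<^sup>L (measure_pmf (DD m p)) (\<lambda>y. ff m x y) = 1 - wq m p x"
proof -
  have int: "integrable (measure_pmf (DD m p)) F" for F :: "_ \<Rightarrow> real"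
    by (rule integrable_measure_pmf_finite[OF finDD])
  have "integral\<^sup>L (measure_pmf (DD m p)) (\<lambda>y. 1 - ff m x y) = wq m p x"
    unfolding one_minus_ff by (subst E_DD_prod) (use assms in \<open>auto simp: wq_def intro!: prod.cong\<close>)
  moreover have "integral\<^sup>L (measure_pmf (DD m p)) (\<lambda>y. 1 - ff m x y) = 1 - integral\<^sup>L (measure_pmf (DD m p)) (\<lambda>y. ff m x y)"
    by (subst Bochner_Integration.integral_diff[OF int int]) (simp add: measure_pmf.prob_space)
  ultimately show ?thesis by simp
qed

lemma E_wq:
  assumes "0 \<le> p" "p \<le> 1"
  shows "integral\<^sup>L (measure_pmf (DD m p)) (wq m p) = (1 - p^2)^m"
proof -
  have "integral\<^sup>L (measure_pmf (DD m p)) (wq m p) =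
        integral\<^sup>L (measure_pmf (DD m p)) (\<lambda>y. \<Prod>a<m. (\<lambda>a b. if b then 1 - p else 1) a (y a))"
    by (simp add: wq_def[abs_def])
  also have "\<dots> = (\<Prod>a<m. (1 - p) * p + 1 * (1 - p))" by (subst E_DD_prod) (use assms in auto)
  also have "(1 - p) * p + 1 * (1 - p) = 1 - p^2" by (simp add: power2_eq_square algebra_simps)
  finally show ?thesis by simp
qed

lemma E_wq2:
  assumes "0 \<le> p" "p \<le> 1"
  shows "integral\<^sup>L (measure_pmf (DD m p)) (\<lambda>x. (wq m p x)^2) = (1 - p + p * (1 - p)^2)^m"
proof -
  have "integral\<^sup>L (measure_pmf (DD m p)) (\<lambda>x. (wq m p x)^2) =
        integral\<^sup>L (measure_pmf (DD m p)) (\<lambda>y. \<Prod>a<m. (\<lambda>a b. if b then (1 - p)^2 else 1) a (y a))"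
    by (simp add: wq_def power2_eq_square prod.distrib[symmetric] if_distrib cong: if_cong)
  also have "\<dots> = (\<Prod>a<m. (1 - p)^2 * p + 1 * (1 - p))" by (subst E_DD_prod) (use assms in auto)
  also have "(1 - p)^2 * p + 1 * (1 - p) = 1 - p + p * (1 - p)^2" by (simp add: algebra_simps)
  finally show ?thesis by simp
qed

lemma s_formula:
  assumes "0 \<le> p" "p \<le> 1"
  shows "ustat.s (DD m p) (ff m) = (1 - p + p * (1 - p)^2)^m - ((1 - p^2)^m)^2"
proof -
  interpret U: ustat "DD m p" "ff m" by (rule ustat_inst)
  have int: "integrable (measure_pmf (DD m p)) F" for F :: "_ \<Rightarrow> real"
    by (rule integrable_measure_pmf_finite[OF finDD])
  have g: "U.g x = 1 - wq m p x" for x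
    unfolding U.g_def by (rule E_ff_y[OF assms])
  have th: "U.theta = 1 - (1 - p^2)^m"
  proof -
    have "U.theta = integral\<^sup>L (measure_pmf (DD m p)) (\<lambda>x. 1 - wq m p x)"
      unfolding U.theta_def g ..
    also have "\<dots> = 1 - (1 - p^2)^m"
      by (subst Bochner_Integration.integral_diff[OF int int]) (simp add: measure_pmf.prob_space E_wq[OF assms])
    finally show ?thesis .
  qed
  have h: "U.h x = (1 - p^2)^m - wq m p x" for x
    unfolding U.h_def g th by simp
  have "U.s = integral\<^sup>L (measure_pmf (DD m p)) (\<lambda>x. ((1 - p^2)^m - wq m p x)^2)"
    unfolding U.s_def h ..
  also have "\<dots> = integral\<^sup>L (measure_pmf (DD m p)) (\<lambda>x. (wq m p x)^2 + (((1 - p^2)^m)^2 - 2 * (1 - p^2)^m * wq m p x))"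
    by (simp add: power2_diff algebra_simps)
  also have "\<dots> = integral\<^sup>L (measure_pmf (DD m p)) (\<lambda>x. (wq m p x)^2) +
                   integral\<^sup>L (measure_pmf (DD m p)) (\<lambda>x. ((1 - p^2)^m)^2 - 2 * (1 - p^2)^m * wq m p x)"
    by (rule Bochner_Integration.integral_add[OF int int])
  also have "integral\<^sup>L (measure_pmf (DD m p)) (\<lambda>x. ((1 - p^2)^m)^2 - 2 * (1 - p^2)^m * wq m p x)
     = ((1 - p^2)^m)^2 - 2 * (1 - p^2)^m * (1 - p^2)^m"
    by (subst Bochner_Integration.integral_diff[OF int int]) (simp add: measure_pmf.prob_space E_wq[OF assms])
  finally have c: "U.s = integral\<^sup>L (measure_pmf (DD m p)) (\<lambda>x. (wq m p x)^2) + (((1 - p^2)^m)^2 - 2 * (1 - p^2)^m * (1 - p^2)^m)" .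
  have "U.s = (1 - p + p * (1 - p)^2)^m + (((1 - p^2)^m)^2 - 2 * (1 - p^2)^m * (1 - p^2)^m)"
    using c unfolding E_wq2[OF assms] .
  thus ?thesis by (simp add: power2_eq_square algebra_simps)
qed

lemma s_lower:
  assumes e: "0 < \<epsilon>" "\<epsilon> < p" "p < 1 - \<epsilon>" and m: "m \<ge> 1"
  shows "ustat.s (DD m p) (ff m) \<ge> \<epsilon>^(m+3)"
proof -
  define a where "a = 1 - p + p * (1 - p)^2"
  define b where "b = (1 - p^2)^2"
  have p01: "0 \<le> p" "p \<le> 1" using e by auto
  have s: "ustat.s (DD m p) (ff m) = a^m - b^m"
    unfolding s_formula[OF p01] a_def b_def by (simp add: power_mult[symmetric] mult.commute)
  have ab: "a - b = p^3 * (1 - p)" unfolding a_def b_def by (simp add: algebra_simps power2_eq_square power3_eq_cube power4_eq_xxxx)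
  have b0: "0 \<le> b" unfolding b_def by simp
  have ba: "b \<le> a" using ab p01 by (smt (verit) mult_nonneg_nonneg zero_le_power)
  have ae: "\<epsilon> \<le> a" unfolding a_def using e by (smt (verit) mult_nonneg_nonneg zero_le_power2)
  obtain k where k: "m = Suc k" using m by (cases m) auto
  have "b^m = b^k * b" unfolding k by simp
  also have "\<dots> \<le> a^k * b" by (intro mult_right_mono power_mono b0 ba)
  finally have "a^m - b^m \<ge> a^k * (a - b)" unfolding k by (simp add: algebra_simps)
  moreover have "a^k * (a - b) \<ge> \<epsilon>^k * (\<epsilon>^3 * \<epsilon>)"
  proof (intro mult_mono)
    show "\<epsilon>^k \<le> a^k" using ae e by (intro power_mono) auto
    show "\<epsilon>^3 * \<epsilon> \<le> a - b" unfolding ab using e by (intro mult_mono power_mono) auto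
  qed (use e ae in auto)
  moreover have "\<epsilon>^k * (\<epsilon>^3 * \<epsilon>) = \<epsilon>^(m+3)" unfolding k by (simp add: power_add mult_ac eval_nat_numeral)
  ultimately show ?thesis using s by simp
qed


lemma abs_expect_le:
  fixes Y :: "'a \<Rightarrow> real"
  assumes fin: "finite (set_pmf P)"
  shows "integral\<^sup>L (measure_pmf P) (\<lambda>x. \<bar>Y x\<bar>) \<le> sqrt (integral\<^sup>L (measure_pmf P) (\<lambda>x. (Y x)^2))"
proof -
  have int: "integrable (measure_pmf P) F" for F :: "_ \<Rightarrow> real"
    by (rule integrable_measure_pmf_finite[OF fin])
  have "0 \<le> measure_pmf.variance P (\<lambda>x. \<bar>Y x\<bar>)" by (rule measure_pmf.variance_positive)
  also have "measure_pmf.variance P (\<lambda>x. \<bar>Y x\<bar>) = integral\<^sup>L (measure_pmf P) (\<lambda>x. (Y x)^2) - (integral\<^sup>L (measure_pmf P) (\<lambda>x. \<bar>Y x\<bar>))^2"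
    by (subst measure_pmf.variance_eq) (auto simp: int)
  finally have "(integral\<^sup>L (measure_pmf P) (\<lambda>x. \<bar>Y x\<bar>))^2 \<le> integral\<^sup>L (measure_pmf P) (\<lambda>x. (Y x)^2)" by simp
  thus ?thesis by (rule real_le_rsqrt)
qed

lemma rig_integral:
  fixes F :: "(nat \<times> nat \<Rightarrow> bool) \<Rightarrow> 'c::{banach, second_countable_topology}"
  shows "integral\<^sup>L (measure_pmf (rig n M q)) F =
     integral\<^sup>L (measure_pmf (Pi_pmf {..<n} (\<lambda>_. False) (\<lambda>_. DD M q))) (\<lambda>X. F (case_prod X))"
  unfolding rig_eq by (rule integral_map_pmf)

lemma per_n:
  fixes n M :: nat and q :: real
  assumes q: "0 \<le> q" "q \<le> 1"
  defines "PPn \<equiv> Pi_pmf {..<n} (\<lambda>_. False) (\<lambda>_. DD M q)"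
  shows "edges_mean n M q = integral\<^sup>L (measure_pmf PPn) (ustat.N (ff M) n)"
    and "edges_mean n M q = real (card (ustat.Pairs n)) * ustat.theta (DD M q) (ff M)"
    and "edges_var n M q = (real n - 1)^2 * (real n * ustat.s (DD M q) (ff M))
            + integral\<^sup>L (measure_pmf PPn) (\<lambda>X. (ustat.R (DD M q) (ff M) n X)^2)"
    and "0 \<le> integral\<^sup>L (measure_pmf PPn) (\<lambda>X. (ustat.R (DD M q) (ff M) n X)^2)"
    and "integral\<^sup>L (measure_pmf PPn) (\<lambda>X. (ustat.R (DD M q) (ff M) n X)^2) \<le> 2 * real n * (real n - 1)"
    and "\<And>X. ustat.N (ff M) n X - edges_mean n M q = ustat.Lin (DD M q) (ff M) n X + ustat.R (DD M q) (ff M) n X"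
proof -
  interpret U: ustat "DD M q" "ff M" "\<lambda>_. False" by (rule ustat_inst)
  have PP: "U.PP n = PPn" unfolding U.PP_def PPn_def ..
  note rigF = rig_integral[of n M q, folded PPn_def]
  have N_eq: "(\<lambda>X. real (num_edges n M (case_prod X))) = U.N n"
    by (intro ext) (rule num_edges_eq)
  show m1: "edges_mean n M q = integral\<^sup>L (measure_pmf PPn) (U.N n)"
    unfolding edges_mean_def rigF N_eq ..
  show m2: "edges_mean n M q = real (card (U.Pairs n)) * U.theta"
    unfolding m1 PP[symmetric] by (rule U.E_N)
  show "0 \<le> integral\<^sup>L (measure_pmf PPn) (\<lambda>X. (U.R n X)^2)"
    using U.E_R2_bounds(1)[of n] unfolding PP .
  have "integral\<^sup>L (measure_pmf PPn) (\<lambda>X. (U.R n X)^2) \<le> 4 * real (card (U.Pairs n))"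
    using U.E_R2_bounds(2)[of n] unfolding PP .
  also have "\<dots> = 2 * real n * (real n - 1)" by (simp add: U.card_Pairs)
  finally show "integral\<^sup>L (measure_pmf PPn) (\<lambda>X. (U.R n X)^2) \<le> 2 * real n * (real n - 1)" .
  show cen: "\<And>X. U.N n X - edges_mean n M q = U.Lin n X + U.R n X"
    unfolding m1 PP[symmetric] by (rule U.centered)
  have "edges_var n M q = integral\<^sup>L (measure_pmf PPn) (\<lambda>X. (U.N n X - integral\<^sup>L (measure_pmf PPn) (U.N n))^2)"
    unfolding edges_var_def rigF N_eq num_edges_eq ..
  also have "\<dots> = (real n - 1)^2 * (real n * U.s) + integral\<^sup>L (measure_pmf PPn) (\<lambda>X. (U.R n X)^2)"
    unfolding PP[symmetric] by (rule U.var_N)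
  finally show "edges_var n M q = (real n - 1)^2 * (real n * U.s) + integral\<^sup>L (measure_pmf PPn) (\<lambda>X. (U.R n X)^2)" .
qed


lemma cdf_map_pmf_distr:
  fixes T :: "'a \<Rightarrow> real"
  shows "cdf (measure_pmf (map_pmf T P)) x = cdf (distr (measure_pmf P) borel T) x"
  unfolding cdf_def by (simp add: map_pmf_rep_eq measure_distr)

lemma weak_conv_m_cong:
  assumes "\<And>n x. cdf (M n) x = cdf (M' n) x"
  shows "weak_conv_m M L \<longleftrightarrow> weak_conv_m M' L"
  unfolding weak_conv_m_def weak_conv_def using assms by simp

lemma char_distr_pmf:
  fixes T :: "'a \<Rightarrow> real"
  shows "char (distr (measure_pmf P) borel T) t = integral\<^sup>L (measure_pmf P) (\<lambda>x. iexp (t * T x))"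
  unfolding char_def by (subst integral_distr) auto

lemma ns_lim:
  fixes \<epsilon> :: real and m :: "nat \<Rightarrow> nat" and p :: "nat \<Rightarrow> real"
  assumes e: "0 < \<epsilon>" "\<epsilon> < 1/2" and ep: "\<And>n. \<epsilon> < p n \<and> p n < 1 - \<epsilon>" and m1: "\<And>n. m n \<ge> 1"
    and lim: "(\<lambda>n. real (m n) / ln (real n)) \<longlonglongrightarrow> 0"
  shows "filterlim (\<lambda>n. real n * ustat.s (DD (m n) (p n)) (ff (m n))) at_top sequentially"
proof -
  define L where "L = - ln \<epsilon>"
  have L: "L > 0" unfolding L_def using e by simp
  have ev1: "eventually (\<lambda>n. real (m n) / ln (real n) < 1 / (4 * L)) sequentially"
  proof -
    have "eventually (\<lambda>n. dist (real (m n) / ln (real n)) 0 < 1 / (4 * L)) sequentially"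
      using lim L by (simp add: tendsto_iff)
    thus ?thesis by eventually_elim (simp add: dist_real_def abs_less_iff del: abs_divide)
  qed
  have ev2: "eventually (\<lambda>n. ln (real n) \<ge> 12 * L) sequentially"
  proof -
    have "filterlim (\<lambda>n. ln (real n)) at_top sequentially" by real_asymp
    thus ?thesis by (simp add: filterlim_at_top)
  qed
  have ev: "eventually (\<lambda>n. exp (ln (real n) / 2) \<le> real n * ustat.s (DD (m n) (p n)) (ff (m n))) sequentially"
    using ev1 ev2
  proof eventually_elim
    case (elim n)
    have lnpos: "ln (real n) > 0" using elim(2) L by linarith
    hence npos: "real n > 0" by (cases "n = 0") auto
    have "real (m n) < ln (real n) / (4 * L)" using elim(1) lnpos by (simp add: divide_less_eq field_simps)
    hence "real (m n) * L \<le> ln (real n) / 4" using L by (simp add: field_simps)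
    moreover have "3 * L \<le> ln (real n) / 4" using elim(2) by simp
    ultimately have k: "real (m n + 3) * L \<le> ln (real n) / 2" by (simp add: algebra_simps)
    have "exp (- (real (m n + 3) * L)) = exp (real (m n + 3) * ln \<epsilon>)" unfolding L_def by simp
    also have "\<dots> = exp (ln \<epsilon>) ^ (m n + 3)" by (rule exp_of_nat_mult)
    also have "exp (ln \<epsilon>) = \<epsilon>" using e by simp
    finally have "\<epsilon> ^ (m n + 3) = exp (- (real (m n + 3) * L))" by simp
    hence e1: "\<epsilon> ^ (m n + 3) = exp (- (real (m n + 3) * L))" .
    have e2: "exp (ln (real n) - real (m n + 3) * L) = exp (ln (real n)) * exp (- (real (m n + 3) * L))"
      by (subst exp_add[symmetric]) simp
    have "real n * \<epsilon> ^ (m n + 3) = exp (ln (real n) - real (m n + 3) * L)"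
      unfolding e2 e1 using npos by simp
    also have "exp (ln (real n) - real (m n + 3) * L) \<ge> exp (ln (real n) / 2)" using k by simp
    finally have "exp (ln (real n) / 2) \<le> real n * \<epsilon> ^ (m n + 3)" .
    also have "\<dots> \<le> real n * ustat.s (DD (m n) (p n)) (ff (m n))"
      by (intro mult_left_mono s_lower) (use e ep m1 in auto)
    finally show ?case .
  qed
  have "filterlim (\<lambda>n. exp (ln (real n) / 2)) at_top sequentially" by real_asymp
  thus ?thesis using ev by (rule filterlim_at_top_mono)
qed


lemma alg_helper: "(c::real) / q = k / v \<Longrightarrow> t * (c * S / q) = t * (k * S / v)"
proof -
  assume h: "c / q = k / v"
  have "c * S / q = (c / q) * S" by simp
  also have "\<dots> = (k / v) * S" by (simp only: h)
  also have "\<dots> = k * S / v" by simp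
  finally show ?thesis by simp
qed

lemma cancel_helper: "(q::real) \<noteq> 0 \<Longrightarrow> a * q / b / q = a / b"
  by (cases "b = 0") (simp_all add: field_simps)

theorem part1:
  fixes \<epsilon> :: real and m :: "nat \<Rightarrow> nat" and p :: "nat \<Rightarrow> real"
  assumes e: "0 < \<epsilon>" "\<epsilon> < 1/2" and ep: "\<And>n. \<epsilon> < p n \<and> p n < 1 - \<epsilon>" and m1: "\<And>n. m n \<ge> 1"
    and lim: "(\<lambda>n. real (m n) / ln (real n)) \<longlonglongrightarrow> 0"
  shows "weak_conv_m (\<lambda>n. std_edges_distr n (m n) (p n)) std_normal_distribution"
proof -
  define Dn where "Dn n = DD (m n) (p n)" for n
  define fn where "fn n = ff (m n)" for n
  define PPn where "PPn n = Pi_pmf {..<n} (\<lambda>_. False) (\<lambda>_. Dn n)" for n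
  define s where "s n = ustat.s (Dn n) (fn n)" for n
  define hn where "hn n = ustat.h (Dn n) (fn n)" for n
  define Lin where "Lin n = ustat.Lin (Dn n) (fn n) n" for n
  define R where "R n = ustat.R (Dn n) (fn n) n" for n
  define \<mu> where "\<mu> n = edges_mean n (m n) (p n)" for n
  define V where "V n = edges_var n (m n) (p n)" for n
  define B where "B n = integral\<^sup>L (measure_pmf (PPn n)) (\<lambda>X. (R n X)^2)" for n
  define A where "A n = (real n - 1)^2 * (real n * s n)" for n
  define T where "T n S = (real (num_edges n (m n) S) - \<mu> n) / sqrt (V n)" for n S
  define c where "c n = sqrt (A n / V n)" for n
  have U: "ustat (Dn n) (fn n)" for n unfolding Dn_def fn_def by (rule ustat_inst)
  have q01: "0 \<le> p n" "p n \<le> 1" for n using ep[of n] e by auto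
  have finP: "finite (set_pmf (PPn n))" for n
    unfolding PPn_def by (rule finite_set_Pi_pmf) (auto simp: Dn_def finDD)
  have V_eq: "V n = A n + B n" for n
    unfolding V_def A_def B_def s_def R_def fn_def PPn_def Dn_def using per_n(3)[OF q01(1)[of n] q01(2)[of n], where n=n and M="m n"] .
  have B0: "0 \<le> B n" for n unfolding B_def R_def fn_def PPn_def Dn_def using per_n(4)[OF q01(1)[of n] q01(2)[of n], where n=n and M="m n"] .
  have Bb: "B n \<le> 2 * real n * (real n - 1)" for n unfolding B_def R_def fn_def PPn_def Dn_def using per_n(5)[OF q01(1)[of n] q01(2)[of n], where n=n and M="m n"] .
  have cen: "ustat.N (fn n) n X - \<mu> n = Lin n X + R n X" for n X
    unfolding \<mu>_def Lin_def R_def fn_def Dn_def using per_n(6)[OF q01(1)[of n] q01(2)[of n], where n=n and M="m n" and X=X] by (simp add: fn_def Dn_def)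
  have nsl: "filterlim (\<lambda>n. real n * s n) at_top sequentially"
    unfolding s_def Dn_def fn_def by (rule ns_lim[OF e ep m1 lim])
  have evg: "eventually (\<lambda>n. real n \<ge> 2 \<and> real n * s n \<ge> 1) sequentially"
  proof -
    have "eventually (\<lambda>n. real n * s n \<ge> 1) sequentially" using nsl by (simp add: filterlim_at_top)
    moreover have "eventually (\<lambda>n. real n \<ge> 2) sequentially"
      by (rule eventually_sequentiallyI[of 2]) simp
    ultimately show ?thesis by eventually_elim auto
  qed
  have evpos: "eventually (\<lambda>n. real n \<ge> 2 \<and> s n > 0 \<and> A n > 0 \<and> V n > 0) sequentially"
    using evg
  proof eventually_elim
    case (elim n)
    have s: "s n > 0" using elim by (smt (verit) mult_nonneg_nonpos of_nat_0_le_iff)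
    have "A n > 0" unfolding A_def using elim s by (intro mult_pos_pos) auto
    thus ?case using elim s V_eq[of n] B0[of n] by auto
  qed
  have BV: "(\<lambda>n. B n / V n) \<longlonglongrightarrow> 0"
  proof (rule Lim_null_comparison)
    show "eventually (\<lambda>n. norm (B n / V n) \<le> 4 / (real n * s n)) sequentially"
      using evpos
    proof eventually_elim
      case (elim n)
      have s: "s n > 0" and n2: "real n \<ge> 2" and A: "A n > 0" and V: "V n > 0" using elim by auto
      have "norm (B n / V n) = B n / V n" using B0[of n] V by simp
      also have "\<dots> \<le> B n / A n" using B0[of n] A V_eq[of n] by (intro divide_left_mono) auto
      also have "\<dots> \<le> 2 * real n * (real n - 1) / A n" using Bb[of n] A by (intro divide_right_mono) auto
      also have "\<dots> = 2 / ((real n - 1) * s n)"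
      proof -
        have nz: "real n * (real n - 1) \<noteq> 0" using n2 by simp
        have eA: "A n = (real n * (real n - 1)) * ((real n - 1) * s n)"
          unfolding A_def by (simp add: power2_eq_square mult_ac)
        have e2: "2 * real n * (real n - 1) = (real n * (real n - 1)) * 2" by (simp add: mult_ac)
        have "2 * real n * (real n - 1) / A n = ((real n * (real n - 1)) * 2) / ((real n * (real n - 1)) * ((real n - 1) * s n))"
          by (simp only: eA e2)
        also have "\<dots> = 2 / ((real n - 1) * s n)" by (rule mult_divide_mult_cancel_left[OF nz])
        finally show ?thesis .
      qed
      also have "\<dots> \<le> 4 / (real n * s n)"
        using n2 s by (simp add: field_simps)
      finally show ?case .
    qed
    show "(\<lambda>n. 4 / (real n * s n)) \<longlonglongrightarrow> 0"
      by (rule tendsto_divide_0[OF tendsto_const filterlim_at_top_imp_at_infinity[OF nsl]])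
  qed
  have c1: "c \<longlonglongrightarrow> 1"
  proof -
    have "(\<lambda>n. sqrt (1 - B n / V n)) \<longlonglongrightarrow> sqrt (1 - 0)"
      by (intro tendsto_intros BV)
    moreover have "eventually (\<lambda>n. sqrt (1 - B n / V n) = c n) sequentially"
      using evpos by eventually_elim (auto simp: c_def V_eq field_simps)
    ultimately show ?thesis by (simp add: tendsto_cong)
  qed
  have charlim: "(\<lambda>n. char (distr (measure_pmf (rig n (m n) (p n))) borel (T n)) t) \<longlonglongrightarrow> complex_of_real (exp (-(t^2)/2))" for t
  proof -
    define \<psi>1 where "\<psi>1 n = integral\<^sup>L (measure_pmf (PPn n)) (\<lambda>X. iexp (t * ((Lin n X + R n X) / sqrt (V n))))" for n
    define \<psi>2 where "\<psi>2 n = integral\<^sup>L (measure_pmf (PPn n)) (\<lambda>X. iexp (t * (Lin n X / sqrt (V n))))" for n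
    have ch: "char (distr (measure_pmf (rig n (m n) (p n))) borel (T n)) t = \<psi>1 n" for n
    proof -
      have "char (distr (measure_pmf (rig n (m n) (p n))) borel (T n)) t =
            integral\<^sup>L (measure_pmf (rig n (m n) (p n))) (\<lambda>S. iexp (t * T n S))"
        by (rule char_distr_pmf)
      also have "\<dots> = integral\<^sup>L (measure_pmf (PPn n)) (\<lambda>X. iexp (t * T n (case_prod X)))"
        unfolding rig_integral PPn_def Dn_def ..
      also have "\<dots> = \<psi>1 n"
        unfolding \<psi>1_def T_def num_edges_eq by (simp add: cen[unfolded fn_def])
      finally show ?thesis .
    qed
    have d12: "(\<lambda>n. \<psi>1 n - \<psi>2 n) \<longlonglongrightarrow> 0"
    proof (rule Lim_null_comparison)
      show "eventually (\<lambda>n. norm (\<psi>1 n - \<psi>2 n) \<le> \<bar>t\<bar> * sqrt (B n / V n)) sequentially"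
        using evpos
      proof eventually_elim
        case (elim n)
        have V: "V n > 0" using elim by auto
        have int: "integrable (measure_pmf (PPn n)) F" for F :: "_ \<Rightarrow> 'z::{banach, second_countable_topology}"
          by (rule integrable_measure_pmf_finite[OF finP])
        have "\<psi>1 n - \<psi>2 n = integral\<^sup>L (measure_pmf (PPn n))
                 (\<lambda>X. iexp (t * ((Lin n X + R n X) / sqrt (V n))) - iexp (t * (Lin n X / sqrt (V n))))"
          unfolding \<psi>1_def \<psi>2_def by (rule Bochner_Integration.integral_diff[OF int int, symmetric])
        also have "norm \<dots> \<le> integral\<^sup>L (measure_pmf (PPn n))
                 (\<lambda>X. norm (iexp (t * ((Lin n X + R n X) / sqrt (V n))) - iexp (t * (Lin n X / sqrt (V n)))))"
          by (rule integral_norm_bound)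
        also have "\<dots> \<le> integral\<^sup>L (measure_pmf (PPn n)) (\<lambda>X. \<bar>t\<bar> / sqrt (V n) * \<bar>R n X\<bar>)"
        proof (rule integral_mono[OF int int])
          fix X
          have "norm (iexp (t * ((Lin n X + R n X) / sqrt (V n))) - iexp (t * (Lin n X / sqrt (V n))))
                \<le> \<bar>t * ((Lin n X + R n X) / sqrt (V n)) - t * (Lin n X / sqrt (V n))\<bar>"
            by (rule iexp_lipschitz)
          also have "\<dots> = \<bar>t\<bar> / sqrt (V n) * \<bar>R n X\<bar>"
            using V by (simp add: field_simps abs_mult abs_divide)
          finally show "norm (iexp (t * ((Lin n X + R n X) / sqrt (V n))) - iexp (t * (Lin n X / sqrt (V n))))
                \<le> \<bar>t\<bar> / sqrt (V n) * \<bar>R n X\<bar>" .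
        qed
        also have "\<dots> = \<bar>t\<bar> / sqrt (V n) * integral\<^sup>L (measure_pmf (PPn n)) (\<lambda>X. \<bar>R n X\<bar>)"
          by simp
        also have "\<dots> \<le> \<bar>t\<bar> / sqrt (V n) * sqrt (B n)"
          unfolding B_def by (intro mult_left_mono abs_expect_le finP) (use V in auto)
        also have "\<dots> = \<bar>t\<bar> * sqrt (B n / V n)"
          by (simp add: real_sqrt_divide)
        finally show ?case .
      qed
      have "(\<lambda>n. sqrt (B n / V n)) \<longlonglongrightarrow> 0" using tendsto_real_sqrt[OF BV] by simp
      thus "(\<lambda>n. \<bar>t\<bar> * sqrt (B n / V n)) \<longlonglongrightarrow> 0" by (rule tendsto_mult_right_zero)
    qed
    have cl: "(\<lambda>n. integral\<^sup>L (measure_pmf (Pi_pmf {..<n} (\<lambda>_. False) (\<lambda>_. Dn n)))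
            (\<lambda>X. iexp (t * (c n * (\<Sum>i<n. hn n (X i)) / sqrt (real n * s n)))))
         \<longlonglongrightarrow> complex_of_real (exp (-(t^2)/2))"
    proof (rule clt_tri)
      show "finite (set_pmf (Dn n))" for n unfolding Dn_def by (rule finDD)
      show "\<bar>hn n x\<bar> \<le> 1" for n x unfolding hn_def by (rule ustat.h_bound[OF U])
      show "integral\<^sup>L (measure_pmf (Dn n)) (hn n) = 0" for n unfolding hn_def by (rule ustat.Eh[OF U])
      show "s n = integral\<^sup>L (measure_pmf (Dn n)) (\<lambda>x. (hn n x)^2)" for n
        unfolding s_def hn_def by (rule ustat.s_def[OF U])
      show "filterlim (\<lambda>n. real n * s n) at_top sequentially" by (rule nsl)
      show "c \<longlonglongrightarrow> 1" by (rule c1)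
    qed
    have ev2: "eventually (\<lambda>n. integral\<^sup>L (measure_pmf (Pi_pmf {..<n} (\<lambda>_. False) (\<lambda>_. Dn n)))
            (\<lambda>X. iexp (t * (c n * (\<Sum>i<n. hn n (X i)) / sqrt (real n * s n)))) = \<psi>2 n) sequentially"
      using evpos
    proof eventually_elim
      case (elim n)
      have s: "s n > 0" and n2: "real n \<ge> 2" and A: "A n > 0" and V: "V n > 0" using elim by auto
      have sqA: "sqrt (A n) = (real n - 1) * sqrt (real n * s n)"
        unfolding A_def using n2 by (simp add: real_sqrt_mult)
      have sqpos: "sqrt (real n * s n) > 0" using s n2 by simp
      have cq: "c n / sqrt (real n * s n) = (real n - 1) / sqrt (V n)"
        unfolding c_def real_sqrt_divide sqA using sqpos by (rule cancel_helper[OF less_imp_neq[symmetric]])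
      have LinS: "Lin n X = (real n - 1) * (\<Sum>i<n. hn n (X i))" for X
        unfolding Lin_def hn_def ustat.Lin_def[OF U] ..
      have "t * (c n * (\<Sum>i<n. hn n (X i)) / sqrt (real n * s n)) = t * (Lin n X / sqrt (V n))" for X
        unfolding LinS by (rule alg_helper[OF cq])
      thus ?case unfolding \<psi>2_def PPn_def by (intro arg_cong[where f="integral\<^sup>L _"] ext arg_cong[where f=iexp])
    qed
    have "\<psi>2 \<longlonglongrightarrow> complex_of_real (exp (-(t^2)/2))"
      using cl ev2 by (rule Lim_transform_eventually)
    hence "(\<lambda>n. (\<psi>1 n - \<psi>2 n) + \<psi>2 n) \<longlonglongrightarrow> 0 + complex_of_real (exp (-(t^2)/2))"
      by (intro tendsto_add d12)
    thus ?thesis unfolding ch by simp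
  qed
  have wc: "weak_conv_m (\<lambda>n. distr (measure_pmf (rig n (m n) (p n))) borel (T n)) std_normal_distribution"
  proof (rule levy_continuity)
    show "real_distribution (distr (measure_pmf (rig n (m n) (p n))) borel (T n))" for n
      by (rule prob_space.real_distribution_distr[OF measure_pmf.prob_space_axioms]) simp
    show "real_distribution std_normal_distribution" by (rule real_dist_normal_dist)
    show "(\<lambda>n. char (distr (measure_pmf (rig n (m n) (p n))) borel (T n)) t) \<longlonglongrightarrow> char std_normal_distribution t" for t
      unfolding char_std_normal_distribution by (rule charlim)
  qed
  have cd: "cdf ((\<lambda>n. std_edges_distr n (m n) (p n)) n) x = cdf ((\<lambda>n. distr (measure_pmf (rig n (m n) (p n))) borel (T n)) n) x" for n x
    unfolding std_edges_distr_def T_def \<mu>_def V_def by (simp only: cdf_map_pmf_distr)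
  show ?thesis by (subst weak_conv_m_cong[OF cd]) (rule wc)
qed


lemma std_normal_lower:
  assumes "x \<in> {-1..1::real}"
  shows "std_normal_density x \<ge> exp (-1/2) / sqrt (2 * pi)"
proof -
  have "\<bar>x\<bar> \<le> 1" using assms by auto
  hence "x^2 \<le> 1" by (simp add: abs_square_le_1)
  hence "exp (-1/2) \<le> exp (- (x^2) / 2)" by simp
  thus ?thesis unfolding std_normal_density_def by (simp add: divide_right_mono)
qed

lemma emeasure_std_normal_pos:
  assumes "a < b" "a \<ge> -1" "b \<le> 1"
  shows "emeasure std_normal_distribution {a..b} > 0"
proof -
  define c where "c = exp (-1/2) / sqrt (2 * pi)"
  have c: "c > 0" unfolding c_def by simp
  have e: "emeasure std_normal_distribution {a..b} = (\<integral>\<^sup>+ x. ennreal (std_normal_density x) * indicator {a..b} x \<partial>lborel)"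
    by (rule emeasure_density) auto
  have m: "(\<integral>\<^sup>+ x. ennreal c * indicator {a..b} x \<partial>lborel) \<le> (\<integral>\<^sup>+ x. ennreal (std_normal_density x) * indicator {a..b} x \<partial>lborel)"
  proof (rule nn_integral_mono)
    fix x show "ennreal c * indicator {a..b} x \<le> ennreal (std_normal_density x) * indicator {a..b} x"
      using std_normal_lower[of x] assms unfolding c_def
      by (auto simp: indicator_def intro!: ennreal_leI)
  qed
  have i2: "(\<integral>\<^sup>+ x. ennreal c * indicator {a..b} x \<partial>lborel) = ennreal c * ennreal (b - a)"
    using assms by (subst nn_integral_cmult_indicator) auto
  have pos: "ennreal c * ennreal (b - a) > 0" using c assms
    by (simp add: ennreal_mult'' ennreal_zero_less_mult_iff)
  have "0 < (\<integral>\<^sup>+ x. ennreal c * indicator {a..b} x \<partial>lborel)" using pos i2 by simp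
  hence "0 < (\<integral>\<^sup>+ x. ennreal (std_normal_density x) * indicator {a..b} x \<partial>lborel)" using m by (rule less_le_trans)
  thus ?thesis using e by simp
qed

lemma std_normal_cdf0:
  "isCont (cdf std_normal_distribution) 0"
  "0 < cdf std_normal_distribution 0" "cdf std_normal_distribution 0 < 1"
proof -
  interpret N: real_distribution std_normal_distribution by (rule real_dist_normal_dist)
  have e0: "emeasure std_normal_distribution {0} = (\<integral>\<^sup>+ x. ennreal (std_normal_density x) * indicator {0} x \<partial>lborel)"
    by (rule emeasure_density) auto
  have ae: "AE x in lborel. ennreal (std_normal_density x) * indicator {0} x = 0"
    using AE_lborel_singleton[of 0] by eventually_elim simp
  have "(\<integral>\<^sup>+ x. ennreal (std_normal_density x) * indicator {0} x \<partial>lborel) = 0"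
    using ae by (subst nn_integral_0_iff_AE) auto
  with e0 have "measure std_normal_distribution {0} = 0" by (simp add: measure_def)
  thus "isCont (cdf std_normal_distribution) 0" by (simp add: N.isCont_cdf)
  have "0 < emeasure std_normal_distribution {-1..0}" by (rule emeasure_std_normal_pos) auto
  also have "\<dots> \<le> emeasure std_normal_distribution {..0}" by (intro emeasure_mono) auto
  finally show "0 < cdf std_normal_distribution 0"
    unfolding cdf_def by (simp add: N.emeasure_eq_measure)
  have "0 < emeasure std_normal_distribution {1/2..1}" by (rule emeasure_std_normal_pos) auto
  also have "\<dots> \<le> emeasure std_normal_distribution (UNIV - {..0})" by (intro emeasure_mono) auto
  finally have "0 < measure std_normal_distribution (UNIV - {..0})" by (simp add: N.emeasure_eq_measure)
  moreover have "measure std_normal_distribution (UNIV - {..0}) = 1 - measure std_normal_distribution {..0}"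
    using N.prob_compl[of "{..0}"] by simp
  ultimately show "cdf std_normal_distribution 0 < 1" unfolding cdf_def by simp
qed

lemma PR_eq: "ustat.Pairs n = {(i,j). i < j \<and> j < n}"
  by (rule ustat.Pairs_def[OF ustat_inst[of 0 0]])

lemma card_PR_le: "real (card {(i,j). i < j \<and> j < (n::nat)}) \<le> real n ^ 2"
proof -
  have "card {(i,j). i < j \<and> j < n} \<le> card ({..<n} \<times> {..<n})"
    by (intro card_mono) auto
  thus ?thesis by (simp add: power2_eq_square flip: of_nat_mult)
qed

lemma E_nonadj:
  fixes n M i j :: nat and q :: real
  assumes q: "0 \<le> q" "q \<le> 1" and ij: "i < j" "j < n"
  shows "integral\<^sup>L (measure_pmf (Pi_pmf {..<n} (\<lambda>_. False) (\<lambda>_. DD M q))) (\<lambda>X. 1 - ff M (X i) (X j)) = (1 - q^2)^M"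
proof -
  interpret U: ustat "DD M q" "ff M" "\<lambda>_. False" by (rule ustat_inst)
  have int: "integrable (measure_pmf (DD M q)) F" for F :: "_ \<Rightarrow> real"
    by (rule integrable_measure_pmf_finite[OF finDD])
  have y: "integral\<^sup>L (measure_pmf (DD M q)) (\<lambda>y. 1 - ff M x y) = wq M q x" for x
  proof -
    have "integral\<^sup>L (measure_pmf (DD M q)) (\<lambda>y. 1 - ff M x y) = 1 - integral\<^sup>L (measure_pmf (DD M q)) (\<lambda>y. ff M x y)"
      by (subst Bochner_Integration.integral_diff[OF int int]) (simp add: measure_pmf.prob_space)
    thus ?thesis using E_ff_y[OF q, of M x] by simp
  qed
  have "integral\<^sup>L (measure_pmf (U.PP n)) (\<lambda>X. 1 - ff M (X i) (X j)) =
        integral\<^sup>L (measure_pmf (DD M q)) (\<lambda>x. integral\<^sup>L (measure_pmf (DD M q)) (\<lambda>y. 1 - ff M x y))"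
    by (rule U.E2) (use ij in auto)
  also have "\<dots> = (1 - q^2)^M" unfolding y by (rule E_wq[OF q])
  finally show ?thesis unfolding U.PP_def .
qed

lemma delta_lim:
  fixes \<epsilon> :: real and m :: "nat \<Rightarrow> nat"
  assumes e: "0 < \<epsilon>" "\<epsilon> < 1/2"
    and lim: "filterlim (\<lambda>n. real (m n) / ln (real n)) at_top sequentially"
  shows "(\<lambda>n. real n ^ 2 * (1 - \<epsilon>^2) ^ m n) \<longlonglongrightarrow> 0"
proof (rule Lim_null_comparison)
  define K where "K = - ln (1 - \<epsilon>^2)"
  have e2: "\<epsilon>^2 < 1" using power_strict_mono[of \<epsilon> 1 2] e by simp
  have e2': "0 < \<epsilon>^2" using e by simp
  have K: "K > 0" unfolding K_def using e2 e2' by simp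
  have ev1: "eventually (\<lambda>n. real (m n) / ln (real n) \<ge> 3 / K) sequentially"
    using lim by (simp add: filterlim_at_top)
  have ev2: "eventually (\<lambda>n. ln (real n) > 0) sequentially"
  proof -
    have "filterlim (\<lambda>n. ln (real n)) at_top sequentially" by real_asymp
    thus ?thesis by (simp add: filterlim_at_top_dense)
  qed
  show "eventually (\<lambda>n. norm (real n ^ 2 * (1 - \<epsilon>^2) ^ m n) \<le> exp (- ln (real n))) sequentially"
    using ev1 ev2
  proof eventually_elim
    case (elim n)
    have npos: "real n > 0" using elim(2) by (cases "n = 0") auto
    have "3 / K * ln (real n) \<le> real (m n)" using elim by (simp add: le_divide_eq)
    hence mk: "3 * ln (real n) \<le> real (m n) * K" using K by (simp add: field_simps)
    have "(1 - \<epsilon>^2) ^ m n = exp (ln (1 - \<epsilon>^2)) ^ m n" using e2 by simp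
    also have "\<dots> = exp (real (m n) * ln (1 - \<epsilon>^2))" by (rule exp_of_nat_mult[symmetric])
    finally have a: "(1 - \<epsilon>^2) ^ m n = exp (- (real (m n) * K))" unfolding K_def by simp
    have "exp (2 * ln (real n)) = exp (ln (real n)) ^ 2" using exp_of_nat_mult[of 2 "ln (real n)"] by simp
    hence b: "real n ^ 2 = exp (2 * ln (real n))" using npos by simp
    have "norm (real n ^ 2 * (1 - \<epsilon>^2) ^ m n) = exp (2 * ln (real n)) * exp (- (real (m n) * K))"
      using a b by simp
    also have "\<dots> = exp (2 * ln (real n) - real (m n) * K)" by (simp add: exp_diff exp_minus field_simps)
    also have "\<dots> \<le> exp (- ln (real n))" using mk elim(2) by simp
    finally show ?case .
  qed
  show "(\<lambda>n. exp (- ln (real n))) \<longlonglongrightarrow> 0" by real_asymp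
qed


theorem part2:
  fixes \<epsilon> :: real and m :: "nat \<Rightarrow> nat" and p :: "nat \<Rightarrow> real"
  assumes e: "0 < \<epsilon>" "\<epsilon> < 1/2" and ep: "\<And>n. \<epsilon> < p n \<and> p n < 1 - \<epsilon>" and m1: "\<And>n. m n \<ge> 1"
    and lim: "filterlim (\<lambda>n. real (m n) / ln (real n)) at_top sequentially"
  shows "\<not> weak_conv_m (\<lambda>n. std_edges_distr n (m n) (p n)) std_normal_distribution"
proof
  assume wc: "weak_conv_m (\<lambda>n. std_edges_distr n (m n) (p n)) std_normal_distribution"
  define PR where "PR n = {(i,j). i < j \<and> j < (n::nat)}" for n
  define PPn where "PPn n = Pi_pmf {..<n} (\<lambda>_. False) (\<lambda>_. DD (m n) (p n))" for n
  define \<mu> where "\<mu> n = edges_mean n (m n) (p n)" for n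
  define V where "V n = edges_var n (m n) (p n)" for n
  define \<kappa> where "\<kappa> n = (real (card (PR n)) - \<mu> n) / sqrt (V n)" for n
  define T where "T n S = (real (num_edges n (m n) S) - \<mu> n) / sqrt (V n)" for n S
  define Sd where "Sd n X = (\<Sum>z\<in>PR n. 1 - ff (m n) (X (fst z)) (X (snd z)))" for n X
  define \<delta> where "\<delta> n = real (card (PR n)) * (1 - (p n)^2) ^ m n" for n
  define F where "F n = cdf (std_edges_distr n (m n) (p n)) 0" for n
  define \<Phi> where "\<Phi> = cdf std_normal_distribution 0"
  have q01: "0 \<le> p n" "p n \<le> 1" for n using ep[of n] e by auto
  have finPR: "finite (PR n)" for n
    by (rule finite_subset[of _ "{..<n} \<times> {..<n}"]) (auto simp: PR_def)
  have finP: "finite (set_pmf (PPn n))" for n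
    unfolding PPn_def by (rule finite_set_Pi_pmf) (auto simp: finDD)
  have int: "integrable (measure_pmf (PPn n)) G" for n and G :: "_ \<Rightarrow> real"
    by (rule integrable_measure_pmf_finite[OF finP])
  have ff01: "ff M x y = 0 \<or> ff M x y = 1" for M x y by (simp add: ff_def)
  have ESd: "integral\<^sup>L (measure_pmf (PPn n)) (Sd n) = \<delta> n" for n
  proof -
    have "integral\<^sup>L (measure_pmf (PPn n)) (Sd n) =
          (\<Sum>z\<in>PR n. integral\<^sup>L (measure_pmf (PPn n)) (\<lambda>X. 1 - ff (m n) (X (fst z)) (X (snd z))))"
      unfolding Sd_def by (rule Bochner_Integration.integral_sum) (rule int)
    also have "\<dots> = (\<Sum>z\<in>PR n. (1 - (p n)^2) ^ m n)"
      by (intro sum.cong refl) (auto simp: PR_def PPn_def intro!: E_nonadj q01)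
    finally show ?thesis by (simp add: \<delta>_def)
  qed
  have F_eq: "F n = integral\<^sup>L (measure_pmf (PPn n)) (\<lambda>X. indicator {..0} (T n (case_prod X)))" for n
  proof -
    have "F n = measure (measure_pmf (rig n (m n) (p n))) (T n -` {..0})"
      unfolding F_def cdf_def std_edges_distr_def T_def \<mu>_def V_def by simp
    also have "\<dots> = integral\<^sup>L (measure_pmf (rig n (m n) (p n))) (indicator (T n -` {..0}))"
      by simp
    also have "\<dots> = integral\<^sup>L (measure_pmf (PPn n)) (\<lambda>X. indicator (T n -` {..0}) (case_prod X))"
      unfolding rig_integral PPn_def ..
    finally show ?thesis by (simp add: indicator_def)
  qed
  have Sd0: "Sd n X \<ge> 0" for n X
    unfolding Sd_def by (intro sum_nonneg) (auto simp: ff_def)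
  have T_eq: "T n (case_prod X) = (ustat.N (ff (m n)) n X - \<mu> n) / sqrt (V n)" for n X
    unfolding T_def num_edges_eq ..
  have complete: "T n (case_prod X) = \<kappa> n" if "Sd n X < 1" for n X
  proof -
    have all1: "ff (m n) (X i) (X j) = 1" if "(i,j) \<in> PR n" for i j
    proof (rule ccontr)
      assume "ff (m n) (X i) (X j) \<noteq> 1"
      hence "1 - ff (m n) (X i) (X j) = 1" using ff01 by (metis diff_zero)
      moreover have "1 - ff (m n) (X (fst (i,j))) (X (snd (i,j))) \<le> Sd n X"
        unfolding Sd_def using that finPR by (intro member_le_sum) (auto simp: ff_def)
      ultimately show False using \<open>Sd n X < 1\<close> by simp
    qed
    have "ustat.N (ff (m n)) n X = (\<Sum>z\<in>PR n. 1)"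
      unfolding ustat.N_def[OF ustat_inst[of "m n" 0]] PR_eq PR_def[symmetric]
      by (intro sum.cong refl) (auto intro: all1)
    hence "ustat.N (ff (m n)) n X = real (card (PR n))" by simp
    thus ?thesis unfolding T_eq \<kappa>_def by simp
  qed
  have Fcases: "F n \<ge> 1 - \<delta> n \<or> F n \<le> \<delta> n" for n
  proof (cases "\<kappa> n \<le> 0")
    case True
    have "integral\<^sup>L (measure_pmf (PPn n)) (\<lambda>X. 1 - Sd n X) \<le> F n"
      unfolding F_eq
    proof (rule integral_mono[OF int int])
      fix X
      show "1 - Sd n X \<le> indicator {..0} (T n (case_prod X))"
      proof (cases "Sd n X < 1")
        case True
        thus ?thesis using complete[OF True] \<open>\<kappa> n \<le> 0\<close> Sd0[of n X] by (simp add: indicator_def)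
      next
        case False
        thus ?thesis by (simp add: indicator_def)
      qed
    qed
    moreover have "integral\<^sup>L (measure_pmf (PPn n)) (\<lambda>X. 1 - Sd n X) = 1 - \<delta> n"
      by (subst Bochner_Integration.integral_diff[OF int int]) (simp add: measure_pmf.prob_space ESd)
    ultimately show ?thesis by simp
  next
    case False
    have "F n \<le> integral\<^sup>L (measure_pmf (PPn n)) (Sd n)"
      unfolding F_eq
    proof (rule integral_mono[OF int int])
      fix X
      show "indicator {..0} (T n (case_prod X)) \<le> Sd n X"
      proof (cases "Sd n X < 1")
        case True
        thus ?thesis using complete[OF True] \<open>\<not> \<kappa> n \<le> 0\<close> Sd0[of n X] by (simp add: indicator_def)
      next
        case False
        thus ?thesis by (simp add: indicator_def)
      qed
    qed
    thus ?thesis using ESd by simp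
  qed
  have \<delta>lim: "\<delta> \<longlonglongrightarrow> 0"
  proof (rule Lim_null_comparison)
    show "eventually (\<lambda>n. norm (\<delta> n) \<le> real n ^ 2 * (1 - \<epsilon>^2) ^ m n) sequentially"
    proof (intro always_eventually allI)
      fix n
      have pe: "1 - (p n)^2 \<le> 1 - \<epsilon>^2"
        using ep[of n] e power_mono[of \<epsilon> "p n" 2] by auto
      have pe0: "0 \<le> 1 - (p n)^2" using q01[of n] by (simp add: power_le_one)
      have "norm (\<delta> n) = real (card (PR n)) * (1 - (p n)^2) ^ m n"
        unfolding \<delta>_def using pe0 by simp
      also have "\<dots> \<le> real n ^ 2 * (1 - \<epsilon>^2) ^ m n"
        by (intro mult_mono power_mono pe pe0) (use card_PR_le[of n] pe0 in \<open>auto simp: PR_def\<close>)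
      finally show "norm (\<delta> n) \<le> real n ^ 2 * (1 - \<epsilon>^2) ^ m n" .
    qed
    show "(\<lambda>n. real n ^ 2 * (1 - \<epsilon>^2) ^ m n) \<longlonglongrightarrow> 0" by (rule delta_lim[OF e lim])
  qed
  have Flim: "F \<longlonglongrightarrow> \<Phi>"
    using wc std_normal_cdf0(1) unfolding weak_conv_m_def weak_conv_def F_def \<Phi>_def by blast
  define \<eta> where "\<eta> = min \<Phi> (1 - \<Phi>) / 2"
  have \<eta>: "\<eta> > 0" unfolding \<eta>_def \<Phi>_def using std_normal_cdf0(2,3) by simp
  have "eventually (\<lambda>n. dist (F n) \<Phi> < \<eta>) sequentially" using Flim \<eta> by (simp add: tendsto_iff)
  moreover have "eventually (\<lambda>n. dist (\<delta> n) 0 < \<eta>) sequentially" using \<delta>lim \<eta> by (simp add: tendsto_iff)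
  ultimately have "eventually (\<lambda>n. False) sequentially"
  proof eventually_elim
    case (elim n)
    have a: "\<bar>F n - \<Phi>\<bar> < \<eta>" "\<bar>\<delta> n\<bar> < \<eta>" using elim by (auto simp: dist_real_def)
    have b: "2 * \<eta> \<le> \<Phi>" "2 * \<eta> \<le> 1 - \<Phi>" unfolding \<eta>_def by auto
    show False using Fcases[of n] a b by linarith
  qed
  thus False by simp
qed


theorem proposition7p7:
  fixes \<epsilon> :: real and m :: "nat \<Rightarrow> nat" and p :: "nat \<Rightarrow> real"
  assumes "0 < \<epsilon>" and "\<epsilon> < 1/2"
    and "\<And>n. \<epsilon> < p n \<and> p n < 1 - \<epsilon>"
    and "\<And>n. m n \<ge> 1"
  shows "(((\<lambda>n. real (m n) / ln (real n)) \<longlonglongrightarrow> 0) \<longrightarrow>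
           weak_conv_m (\<lambda>n. std_edges_distr n (m n) (p n)) std_normal_distribution) \<and>
         (filterlim (\<lambda>n. real (m n) / ln (real n)) at_top sequentially \<longrightarrow>
           \<not> weak_conv_m (\<lambda>n. std_edges_distr n (m n) (p n)) std_normal_distribution)"
proof (intro conjI impI)
  assume "(\<lambda>n. real (m n) / ln (real n)) \<longlonglongrightarrow> 0"
  thus "weak_conv_m (\<lambda>n. std_edges_distr n (m n) (p n)) std_normal_distribution"
    by (rule part1[OF assms])
next
  assume "filterlim (\<lambda>n. real (m n) / ln (real n)) at_top sequentially"
  thus "\<not> weak_conv_m (\<lambda>n. std_edges_distr n (m n) (p n)) std_normal_distribution"
    by (rule part2[OF assms])
qed

end
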